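(* Consider the simultaneous block-fading binary symmetric wiretap channel with parameters $q_1\in[0,1]$, $q_2=1-q_1$, and crossover probabilities satisfying $p_1\le p_2\le 0.5$, $p_1^*\le p_2^*\le 0.5$, $p_1\le p_1^*$, $p_2\le p_2^*$. Its secrecy capacity with channel state information available only at the decoders satisfies $$C^s_{\textrm{CSI-D}}\le q_1[H(p_1^* )-H(p_1)]+q_2[H(p_2^* )-H(p_2)].$$
   Context: $H(p)=-p\log_2 p-(1-p)\log_2(1-p)$ is the binary entropy function, and BSC$(p)$ denotes the binary symmetric channel with crossover probability $p$. Simultaneous block-fading binary symmetric wiretap channel: the transmitter (Alice) sends $NB$ binary symbols $X_{1:NB}$ organized in $B$ fading blocks of length $N$. Each block $k$ has a fading state $S_k\in\{1,2\}$, constant within the block, with $\Pr(S_k=1)=q_1$, $\Pr(S_k=2)=q_2$, states independent across blocks. Within block $k$, the legitimate receiver (Bob) observes the output $Y$ of $N$ independent uses of BSC$(p_{S_k})$, and the eavesdropper (Eve) observes the output $Z$ of $N$ independent uses of BSC$(p^*_{S_k})$ (same state for both, i.e. simultaneous fading). Let $\mathsf{S}=(S_1,\dots,S_B)$. A code consists of a (possibly randomized) encoder $X_{1:NB}=f(\mathsf{M})$ of a uniformly distributed message $\mathsf{M}$, which knows only the state distribution (not the realizations), and a decoder $\hat{\mathsf{M}}=g(Y_{1:NB},\mathsf{S})$ that knows the states; its rate is $\frac{1}{NB}\log_2$ of the message-set size. A rate $R$ is achievable if there are such codes of rate at least $R$ (asymptotically) with $N,B\to\infty$ such that $\Pr\{\mathsf{M}\ne\hat{\mathsf{M}}\}\to0$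 (reliability) and $\frac{1}{NB}I(\mathsf{M};Z_{1:NB}\mid\mathsf{S})\to 0$ (weak secrecy). $C^s_{\textrm{CSI-D}}$ is the supremum of achievable rates. *)

theory Defs
  imports "HOL-Probability.Probability"
begin

text \<open>Binary entropy function (in bits); note 0 * log 2 0 = 0 in Isabelle.\<close>
definition bin_entropy :: "real \<Rightarrow> real" where
  "bin_entropy p = - p * log 2 p - (1 - p) * log 2 (1 - p)"

definition state_pmf :: "real \<Rightarrow> nat pmf" where
  "state_pmf q1 = map_pmf (\<lambda>b. if b then 1 else 2) (bernoulli_pmf q1)"

definition xover :: "real \<Rightarrow> real \<Rightarrow> nat \<Rightarrow> real" where
  "xover a b s = (if s = 1 then a else b)"

definition chan_out :: "nat \<Rightarrow> nat \<Rightarrow> (nat \<Rightarrow> bool) \<Rightarrow> (nat \<Rightarrow> bool) \<Rightarrow> (nat \<Rightarrow> bool)" where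
  "chan_out N B x e = (\<lambda>i. if i < N * B then (x i \<noteq> e i) else False)"

text \<open>Noise pattern of N*B independent BSC uses; sample i lies in fading block i div N,
  whose state is s (i div N); in state t the crossover probability is xover a b t.\<close>
definition noise_pmf :: "nat \<Rightarrow> nat \<Rightarrow> real \<Rightarrow> real \<Rightarrow> (nat \<Rightarrow> nat) \<Rightarrow> (nat \<Rightarrow> bool) pmf" where
  "noise_pmf N B a b s = Pi_pmf {..<N * B} False (\<lambda>i. bernoulli_pmf (xover a b (s (i div N))))"

text \<open>The message is uniform on {..<K}; the encoder
  does not see the states (X is drawn independently of S); states are i.i.d. over the B blocks.\<close>
definition code_dist ::
  "nat \<Rightarrow> nat \<Rightarrow> real \<Rightarrow> real \<Rightarrow> real \<Rightarrow> real \<Rightarrow> real \<Rightarrow> nat \<Rightarrow> (nat \<Rightarrow> (nat \<Rightarrow> bool) pmf)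
    \<Rightarrow> (nat \<times> (nat \<Rightarrow> nat) \<times> (nat \<Rightarrow> bool) \<times> (nat \<Rightarrow> bool)) pmf" where
  "code_dist N B q1 p1 p2 ps1 ps2 K f = do {
     m \<leftarrow> pmf_of_set {..<K};
     x \<leftarrow> f m;
     s \<leftarrow> Pi_pmf {..<B} 1 (\<lambda>_. state_pmf q1);
     ey \<leftarrow> noise_pmf N B p1 p2 s;
     ez \<leftarrow> noise_pmf N B ps1 ps2 s;
     return_pmf (m, s, chan_out N B x ey, chan_out N B x ez) }"

text \<open>Conditional mutual information I(A;C|B) in bits of a discrete joint distribution J on
  triples (a,b,c) (all distributions arising here have finite support).\<close>
definition cond_mutual_info :: "('a \<times> 'b \<times> 'c) pmf \<Rightarrow> real" where
  "cond_mutual_info J =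
     (\<Sum>(a, b, c) \<in> set_pmf J. pmf J (a, b, c) *
        log 2 ((pmf J (a, b, c) * pmf (map_pmf (\<lambda>(a, b, c). b) J) b) /
               (pmf (map_pmf (\<lambda>(a, b, c). (a, b)) J) (a, b) *
                pmf (map_pmf (\<lambda>(a, b, c). (b, c)) J) (b, c))))"

definition err_prob where
  "err_prob N B q1 p1 p2 ps1 ps2 K f g =
     measure_pmf.prob (code_dist N B q1 p1 p2 ps1 ps2 K f) {(m, s, y, z). g y s \<noteq> m}"

definition leakage where
  "leakage N B q1 p1 p2 ps1 ps2 K f =
     cond_mutual_info (map_pmf (\<lambda>(m, s, y, z). (m, s, z)) (code_dist N B q1 p1 p2 ps1 ps2 K f))"

definition achievable_rate where
  "achievable_rate q1 p1 p2 ps1 ps2 R \<longleftrightarrow>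
    (\<exists>(N :: nat \<Rightarrow> nat) (B :: nat \<Rightarrow> nat) (K :: nat \<Rightarrow> nat)
       (f :: nat \<Rightarrow> nat \<Rightarrow> (nat \<Rightarrow> bool) pmf) (g :: nat \<Rightarrow> (nat \<Rightarrow> bool) \<Rightarrow> (nat \<Rightarrow> nat) \<Rightarrow> nat).
       filterlim N at_top sequentially \<and> filterlim B at_top sequentially \<and>
       (\<forall>n. K n \<ge> 1) \<and>
       (\<forall>\<epsilon>>0. eventually (\<lambda>n. log 2 (real (K n)) / real (N n * B n) \<ge> R - \<epsilon>) sequentially) \<and>
       (\<lambda>n. err_prob (N n) (B n) q1 p1 p2 ps1 ps2 (K n) (f n) (g n)) \<longlonglongrightarrow> 0 \<and>
       (\<lambda>n. leakage (N n) (B n) q1 p1 p2 ps1 ps2 (K n) (f n) / real (N n * B n)) \<longlonglongrightarrow> 0)"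

definition secrecy_capacity_CSI_D :: "real \<Rightarrow> real \<Rightarrow> real \<Rightarrow> real \<Rightarrow> real \<Rightarrow> ereal" where
  "secrecy_capacity_CSI_D q1 p1 p2 ps1 ps2 = Sup (ereal ` {R. achievable_rate q1 p1 p2 ps1 ps2 R})"

end

theory Submission
  imports Defs
begin


lemma pmf_bind_sum:
  assumes "finite A" "set_pmf D \<subseteq> A"
  shows "pmf (bind_pmf D K) x = (\<Sum>d\<in>A. pmf D d * pmf (K d) x)"
  unfolding pmf_bind using assms by (subst integral_measure_pmf[where A=A]) auto

lemma log_div_pos: "0 < x \<Longrightarrow> 0 < y \<Longrightarrow> log 2 (x / y) = log 2 x - log 2 y"
  by (simp add: log_divide)
lemma log_mult_pos: "0 < x \<Longrightarrow> 0 < y \<Longrightarrow> log 2 (x * y) = log 2 x + log 2 y"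
  by (simp add: log_mult)

lemma pmf_map_Pair: "pmf (map_pmf (Pair w') K) (w,v) = (if w' = w then pmf K v else 0)"
proof (cases "w' = w")
  case True
  have "inj (Pair w)" by (auto simp: inj_def)
  then show ?thesis using True pmf_map_inj'[of "Pair w" K v] by simp
next
  case False
  then have "(w,v) \<notin> set_pmf (map_pmf (Pair w') K)" by auto
  then show ?thesis using False by (simp add: set_pmf_eq)
qed

lemma gibbs:
  fixes p q :: "'a \<Rightarrow> real"
  assumes A: "finite A" and p: "\<And>x. x\<in>A \<Longrightarrow> 0 \<le> p x" and q: "\<And>x. x\<in>A \<Longrightarrow> 0 \<le> q x"
    and pq: "\<And>x. x\<in>A \<Longrightarrow> 0 < p x \<Longrightarrow> 0 < q x" and s: "sum q A \<le> sum p A"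
  shows "(\<Sum>x\<in>A. p x * log 2 (q x / p x)) \<le> 0"
proof -
  have "(\<Sum>x\<in>A. p x * log 2 (q x / p x)) \<le> (\<Sum>x\<in>A. (q x - p x) / ln 2)"
  proof (rule sum_mono)
    fix x assume x: "x \<in> A"
    show "p x * log 2 (q x / p x) \<le> (q x - p x) / ln 2"
    proof (cases "p x = 0")
      case True thus ?thesis using q[OF x] by simp
    next
      case False
      hence pp: "0 < p x" using p[OF x] by simp
      hence qq: "0 < q x" using pq x by simp
      have "ln (q x / p x) \<le> q x / p x - 1" using pp qq by (intro ln_le_minus_one) simp
      hence "p x * ln (q x / p x) \<le> p x * (q x / p x - 1)" using pp by (simp add: mult_left_mono)
      also have "\<dots> = q x - p x" using pp by (simp add: field_simps)
      finally have "p x * ln (q x / p x) \<le> q x - p x" .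
      moreover have "p x * log 2 (q x / p x) = (p x * ln (q x / p x)) / ln 2" by (simp add: log_def)
      ultimately show ?thesis by (simp add: divide_right_mono)
    qed
  qed
  also have "\<dots> = (sum q A - sum p A) / ln 2" by (simp add: sum_divide_distrib[symmetric] sum_subtractf)
  also have "\<dots> \<le> 0" using s by (simp add: divide_nonpos_pos)
  finally show ?thesis .
qed

lemma logsum:
  fixes p q :: "'a \<Rightarrow> real"
  assumes A: "finite A" and p: "\<And>x. x\<in>A \<Longrightarrow> 0 \<le> p x" and q: "\<And>x. x\<in>A \<Longrightarrow> 0 \<le> q x"
    and pq: "\<And>x. x\<in>A \<Longrightarrow> 0 < p x \<Longrightarrow> 0 < q x"
  shows "sum p A * log 2 (sum p A / sum q A) \<le> (\<Sum>x\<in>A. p x * log 2 (p x / q x))"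
proof (cases "sum p A = 0")
  case True
  hence "\<forall>x\<in>A. p x = 0" using sum_nonneg_eq_0_iff[OF A] p by blast
  thus ?thesis using True by simp
next
  case False
  hence sp: "0 < sum p A" using sum_nonneg[of A p] p by fastforce
  obtain x where x: "x \<in> A" "0 < p x" using False p
    by (metis less_eq_real_def sum.neutral)
  have "q x \<le> sum q A" using A x q by (intro member_le_sum) auto
  hence sq: "0 < sum q A" using pq x by fastforce
  define c where "c = sum p A / sum q A"
  have c: "0 < c" using sp sq c_def by simp
  have "(\<Sum>x\<in>A. p x * log 2 ((c * q x) / p x)) \<le> 0"
  proof (rule gibbs[OF A p])
    show "0 \<le> c * q x" if "x \<in> A" for x using c q that by simp
    show "0 < c * q x" if "x \<in> A" "0 < p x" for x using c pq that by simp
    have "(\<Sum>x\<in>A. c * q x) = c * sum q A" by (simp add: sum_distrib_left)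
    thus "(\<Sum>x\<in>A. c * q x) \<le> sum p A" using sq by (simp add: c_def)
  qed
  moreover have "(\<Sum>x\<in>A. p x * log 2 ((c * q x) / p x)) = (\<Sum>x\<in>A. p x * log 2 c - p x * log 2 (p x / q x))"
  proof (rule sum.cong)
    fix x assume x: "x \<in> A"
    show "p x * log 2 ((c * q x) / p x) = p x * log 2 c - p x * log 2 (p x / q x)"
    proof (cases "p x = 0")
      case False
      hence pp: "0 < p x" using p[OF x] by simp
      hence qq: "0 < q x" using pq x by simp
      show ?thesis using pp qq c by (simp add: log_div_pos log_mult_pos algebra_simps)
    qed simp
  qed simp
  ultimately have "sum p A * log 2 c \<le> (\<Sum>x\<in>A. p x * log 2 (p x / q x))"
    by (simp add: sum_subtractf sum_distrib_right)
  thus ?thesis by (simp add: c_def)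
qed

definition ent :: "'a pmf \<Rightarrow> real" where
  "ent P = (\<Sum>x\<in>set_pmf P. - (pmf P x * log 2 (pmf P x)))"

lemma ent_superset: "finite A \<Longrightarrow> set_pmf P \<subseteq> A \<Longrightarrow> ent P = (\<Sum>x\<in>A. - (pmf P x * log 2 (pmf P x)))"
  unfolding ent_def by (rule sum.mono_neutral_left) (auto simp: set_pmf_eq)

definition mi :: "('a \<times> 'b) pmf \<Rightarrow> real" where
  "mi D = (\<Sum>(a,c)\<in>set_pmf D. pmf D (a,c) * log 2 (pmf D (a,c) / (pmf (map_pmf fst D) a * pmf (map_pmf snd D) c)))"

lemma mi_superset:
  assumes "finite A" "finite C" "set_pmf D \<subseteq> A \<times> C"
  shows "mi D = (\<Sum>a\<in>A. \<Sum>c\<in>C. pmf D (a,c) * log 2 (pmf D (a,c) / (pmf (map_pmf fst D) a * pmf (map_pmf snd D) c)))"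
proof -
  have "mi D = (\<Sum>(a,c)\<in>A \<times> C. pmf D (a,c) * log 2 (pmf D (a,c) / (pmf (map_pmf fst D) a * pmf (map_pmf snd D) c)))"
    unfolding mi_def using assms by (intro sum.mono_neutral_left) (auto simp: set_pmf_eq)
  then show ?thesis by (simp add: sum.cartesian_product)
qed

lemma mix:
  assumes fU: "finite (set_pmf U)" and fG: "\<And>m. m \<in> set_pmf U \<Longrightarrow> finite (set_pmf (G m))"
  shows "mi (bind_pmf U (\<lambda>m. map_pmf (Pair m) (G m))) = ent (bind_pmf U G) - (\<Sum>m\<in>set_pmf U. pmf U m * ent (G m))"
proof -
  define D where "D = bind_pmf U (\<lambda>m. map_pmf (Pair m) (G m))"
  define A where "A = set_pmf U"
  define C where "C = set_pmf (bind_pmf U G)"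
  have fA: "finite A" using fU A_def by simp
  have fC: "finite C" unfolding C_def using fU fG by (simp add: set_bind_pmf)
  have GC: "\<And>m. m \<in> A \<Longrightarrow> set_pmf (G m) \<subseteq> C" unfolding A_def C_def by (auto simp: set_bind_pmf)
  have sD: "set_pmf D \<subseteq> A \<times> C" unfolding D_def A_def C_def by (auto simp: set_bind_pmf)
  have pD: "pmf D (m,c) = pmf U m * pmf (G m) c" for m c
  proof -
    have "pmf D (m,c) = (\<Sum>m'\<in>A. pmf U m' * pmf (map_pmf (Pair m') (G m')) (m,c))"
      unfolding D_def by (rule pmf_bind_sum) (simp_all add: fU A_def)
    also have "\<dots> = (\<Sum>m'\<in>A. if m' = m then pmf U m * pmf (G m) c else 0)"
      by (rule sum.cong) (auto simp: pmf_map_Pair)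
    also have "\<dots> = pmf U m * pmf (G m) c" using fA by (auto simp: A_def set_pmf_eq)
    finally show ?thesis .
  qed
  have m1: "map_pmf fst D = U"
    unfolding D_def by (simp add: map_bind_pmf pmf.map_comp o_def map_pmf_const bind_return_pmf')
  have m2: "map_pmf snd D = bind_pmf U G"
    unfolding D_def by (simp add: map_bind_pmf pmf.map_comp o_def)
  let ?Gb = "pmf (bind_pmf U G)"
  have "mi D = (\<Sum>m\<in>A. \<Sum>c\<in>C. pmf D (m,c) * log 2 (pmf D (m,c) / (pmf U m * ?Gb c)))"
    using mi_superset[OF fA fC sD] by (simp add: m1 m2)
  also have "\<dots> = (\<Sum>m\<in>A. \<Sum>c\<in>C. pmf U m * (pmf (G m) c * log 2 (pmf (G m) c)) - pmf U m * pmf (G m) c * log 2 (?Gb c))"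
  proof (intro sum.cong refl)
    fix m c assume m: "m \<in> A" and c: "c \<in> C"
    show "pmf D (m,c) * log 2 (pmf D (m,c) / (pmf U m * ?Gb c)) =
      pmf U m * (pmf (G m) c * log 2 (pmf (G m) c)) - pmf U m * pmf (G m) c * log 2 (?Gb c)"
    proof (cases "pmf (G m) c = 0")
      case False
      have u: "0 < pmf U m" using m by (simp add: A_def pmf_positive)
      have g: "0 < pmf (G m) c" using False by (simp add: pmf_nonneg order.not_eq_order_implies_strict)
      have "c \<in> set_pmf (G m)" using False by (simp add: set_pmf_eq)
      hence "c \<in> set_pmf (bind_pmf U G)" using m by (auto simp: A_def set_bind_pmf)
      hence b: "0 < ?Gb c" by (simp add: pmf_positive)
      show ?thesis using u g b by (simp add: pD log_div_pos log_mult_pos algebra_simps)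
    qed (simp add: pD)
  qed
  also have "\<dots> = (\<Sum>m\<in>A. pmf U m * (\<Sum>c\<in>C. pmf (G m) c * log 2 (pmf (G m) c))) - (\<Sum>c\<in>C. (\<Sum>m\<in>A. pmf U m * pmf (G m) c) * log 2 (?Gb c))"
    by (simp add: sum_subtractf sum_distrib_left sum_distrib_right sum.swap[of _ C A])
  also have "(\<Sum>m\<in>A. pmf U m * (\<Sum>c\<in>C. pmf (G m) c * log 2 (pmf (G m) c))) = - (\<Sum>m\<in>A. pmf U m * ent (G m))"
    by (simp add: ent_superset[OF fC GC] sum_negf sum_distrib_left[symmetric])
  also have "(\<Sum>c\<in>C. (\<Sum>m\<in>A. pmf U m * pmf (G m) c) * log 2 (?Gb c)) = - ent (bind_pmf U G)"
  proof -
    have "\<And>c. (\<Sum>m\<in>A. pmf U m * pmf (G m) c) = ?Gb c"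
      by (rule pmf_bind_sum[symmetric]) (simp_all add: fU A_def)
    thus ?thesis by (simp add: ent_def C_def sum_negf)
  qed
  finally show ?thesis by (simp add: D_def A_def)
qed

lemma mi_nonneg:
  assumes fD: "finite (set_pmf D)" shows "0 \<le> mi D"
proof -
  define A where "A = set_pmf (map_pmf fst D)"
  define C where "C = set_pmf (map_pmf snd D)"
  have fA: "finite A" "finite C" using fD by (simp_all add: A_def C_def)
  have sD: "set_pmf D \<subseteq> A \<times> C" by (force simp: A_def C_def)
  let ?p = "\<lambda>x. pmf D x" and ?q = "\<lambda>(a,c). pmf (map_pmf fst D) a * pmf (map_pmf snd D) c"
  have "(\<Sum>x\<in>A \<times> C. ?p x * log 2 (?q x / ?p x)) \<le> 0"
  proof (rule gibbs)
    show "finite (A \<times> C)" using fA by simp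
    show "0 \<le> ?p x" for x by simp
    show "0 \<le> ?q x" for x by (cases x) simp
    show "0 < ?q x" if "x \<in> A \<times> C" "0 < ?p x" for x
    proof -
      obtain a c where ac: "x = (a,c)" by force
      have "(a,c) \<in> set_pmf D" using that ac by (simp add: set_pmf_eq)
      hence "a \<in> set_pmf (map_pmf fst D)" "c \<in> set_pmf (map_pmf snd D)" by force+
      thus ?thesis using ac by (simp add: pmf_positive)
    qed
    have "sum ?q (A \<times> C) = sum (pmf (map_pmf fst D)) A * sum (pmf (map_pmf snd D)) C"
      by (simp add: sum_product sum.cartesian_product)
    also have "\<dots> = 1" using fA by (simp add: sum_pmf_eq_1 A_def C_def)
    also have "1 = sum ?p (A \<times> C)" using fA sD by (simp add: sum_pmf_eq_1)
    finally show "sum ?q (A \<times> C) \<le> sum ?p (A \<times> C)" by simp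
  qed
  moreover have "mi D = (\<Sum>x\<in>A \<times> C. - (?p x * log 2 (?q x / ?p x)))"
  proof -
    have "mi D = (\<Sum>(a,c)\<in>A \<times> C. pmf D (a,c) * log 2 (pmf D (a,c) / (pmf (map_pmf fst D) a * pmf (map_pmf snd D) c)))"
      unfolding mi_def using fA sD by (intro sum.mono_neutral_left) (auto simp: set_pmf_eq)
    also have "\<dots> = (\<Sum>x\<in>A \<times> C. - (?p x * log 2 (?q x / ?p x)))"
    proof (rule sum.cong[OF refl])
      fix x assume x: "x \<in> A \<times> C"
      obtain a c where ac: "x = (a,c)" by force
      show "(case x of (a,c) \<Rightarrow> pmf D (a,c) * log 2 (pmf D (a,c) / (pmf (map_pmf fst D) a * pmf (map_pmf snd D) c))) = - (?p x * log 2 (?q x / ?p x))"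
      proof (cases "pmf D (a,c) = 0")
        case False
        hence p: "0 < pmf D (a,c)" by (simp add: order.not_eq_order_implies_strict)
        have "(a,c) \<in> set_pmf D" using False by (simp add: set_pmf_eq)
        hence "a \<in> set_pmf (map_pmf fst D)" "c \<in> set_pmf (map_pmf snd D)" by force+
        hence "0 < pmf (map_pmf fst D) a" "0 < pmf (map_pmf snd D) c" by (simp_all add: pmf_positive)
        thus ?thesis using p ac by (simp add: log_div_pos log_mult_pos algebra_simps)
      qed (simp add: ac)
    qed
    finally show ?thesis .
  qed
  ultimately show ?thesis by (simp add: sum_negf)
qed



lemma dpi:
  assumes fD: "finite (set_pmf D)" and fK: "\<And>t. t \<in> snd ` set_pmf D \<Longrightarrow> finite (set_pmf (K t))"
  shows "mi (bind_pmf D (\<lambda>(w,t). map_pmf (Pair w) (K t))) \<le> mi D"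
proof -
  define D' where "D' = bind_pmf D (\<lambda>(w,t). map_pmf (Pair w) (K t))"
  define W where "W = fst ` set_pmf D"
  define T where "T = snd ` set_pmf D"
  define V where "V = (\<Union>t\<in>T. set_pmf (K t))"
  have fW: "finite W" "finite T" using fD by (simp_all add: W_def T_def)
  have fV: "finite V" unfolding V_def T_def using fK fD by (intro finite_UN_I) auto
  have sD: "set_pmf D \<subseteq> W \<times> T" by (force simp: W_def T_def)
  have sD': "set_pmf D' \<subseteq> W \<times> V" by (force simp: D'_def W_def V_def T_def set_bind_pmf)
  have KV: "\<And>t. t \<in> T \<Longrightarrow> set_pmf (K t) \<subseteq> V" by (auto simp: V_def)
  have mt: "map_pmf fst D' = map_pmf fst D"
  proof -
    have "(\<lambda>x. map_pmf fst (case x of (w,t) \<Rightarrow> map_pmf (Pair w) (K t))) = (\<lambda>x. return_pmf (fst x))"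
      by (rule ext) (auto simp: pmf.map_comp o_def map_pmf_const split: prod.splits)
    note eq = this
    show ?thesis unfolding D'_def map_bind_pmf eq by (simp add: map_pmf_def)
  qed
  have mv: "map_pmf snd D' = bind_pmf (map_pmf snd D) K"
  proof -
    have "(\<lambda>x. map_pmf snd (case x of (w,t) \<Rightarrow> map_pmf (Pair w) (K t))) = (\<lambda>x. K (snd x))"
      by (rule ext) (auto simp: pmf.map_comp o_def split: prod.splits)
    note eq = this
    show ?thesis unfolding D'_def map_bind_pmf eq by (simp add: bind_map_pmf)
  qed
  let ?DW = "pmf (map_pmf fst D)" and ?DT = "pmf (map_pmf snd D)" and ?DV = "pmf (map_pmf snd D')"
  have sT: "set_pmf (map_pmf snd D) = T" by (simp add: T_def)
  have pD': "pmf D' (w,v) = (\<Sum>t\<in>T. pmf D (w,t) * pmf (K t) v)" for w v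
  proof -
    have "pmf D' (w,v) = (\<Sum>x\<in>W \<times> T. pmf D x * pmf ((\<lambda>(w,t). map_pmf (Pair w) (K t)) x) (w,v))"
      unfolding D'_def using fW sD by (intro pmf_bind_sum) auto
    also have "\<dots> = (\<Sum>w'\<in>W. \<Sum>t\<in>T. if w' = w then pmf D (w,t) * pmf (K t) v else 0)"
      unfolding sum.cartesian_product by (rule sum.cong) (auto simp: pmf_map_Pair)
    also have "\<dots> = (\<Sum>t\<in>T. \<Sum>w'\<in>W. if w' = w then pmf D (w,t) * pmf (K t) v else 0)"
      by (rule sum.swap)
    also have "\<dots> = (\<Sum>t\<in>T. pmf D (w,t) * pmf (K t) v)"
    proof (rule sum.cong[OF refl])
      fix t assume "t \<in> T"
      have "w \<notin> W \<Longrightarrow> pmf D (w,t) = 0" by (force simp: W_def set_pmf_eq)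
      thus "(\<Sum>w'\<in>W. if w' = w then pmf D (w,t) * pmf (K t) v else 0) = pmf D (w,t) * pmf (K t) v"
        using fW by (auto simp: sum.delta')
    qed
    finally show ?thesis .
  qed
  have pV: "?DV v = (\<Sum>t\<in>T. ?DT t * pmf (K t) v)" for v
    unfolding mv using fW sT by (intro pmf_bind_sum) auto
  define p where "p = (\<lambda>w t v. pmf D (w,t) * pmf (K t) v)"
  define q where "q = (\<lambda>w t v. pmf D' (w,v) * ?DT t * pmf (K t) v / ?DV v)"
  have pos: "0 < pmf D' (w,v) \<and> 0 < ?DT t \<and> 0 < ?DV v \<and> 0 < ?DW w \<and> 0 < pmf D (w,t) \<and> 0 < pmf (K t) v"
    if "w \<in> W" "t \<in> T" "v \<in> V" "0 < p w t v" for w t v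
  proof -
    have d: "0 < pmf D (w,t)" and k: "0 < pmf (K t) v" using that
      by (auto simp: p_def zero_less_mult_iff)
    have "(w,t) \<in> set_pmf D" using d by (simp add: set_pmf_eq)
    hence dt: "0 < ?DT t" and dw: "0 < ?DW w"
      by (force intro: pmf_positive)+
    have "pmf D (w,t) * pmf (K t) v \<le> pmf D' (w,v)" unfolding pD'
      using fW that by (intro member_le_sum) auto
    moreover have "?DT t * pmf (K t) v \<le> ?DV v" unfolding pV
      using fW that by (intro member_le_sum) auto
    ultimately show ?thesis using d k dt dw by (smt (verit) mult_pos_pos)
  qed
  have gib: "(\<Sum>x\<in>W \<times> (T \<times> V). p (fst x) (fst (snd x)) (snd (snd x)) * log 2 (q (fst x) (fst (snd x)) (snd (snd x)) / p (fst x) (fst (snd x)) (snd (snd x)))) \<le> 0"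
  proof (rule gibbs)
    show "finite (W \<times> (T \<times> V))" using fW fV by simp
    show "0 \<le> p (fst x) (fst (snd x)) (snd (snd x))" for x by (simp add: p_def)
    show "0 \<le> q (fst x) (fst (snd x)) (snd (snd x))" for x by (simp add: q_def)
    show "0 < q (fst x) (fst (snd x)) (snd (snd x))" if "x \<in> W \<times> (T \<times> V)" "0 < p (fst x) (fst (snd x)) (snd (snd x))" for x
      using pos[of "fst x" "fst (snd x)" "snd (snd x)"] that by (auto simp: q_def)
    have "(\<Sum>x\<in>W \<times> (T \<times> V). p (fst x) (fst (snd x)) (snd (snd x))) = (\<Sum>w\<in>W. \<Sum>t\<in>T. \<Sum>v\<in>V. p w t v)"
      by (simp add: sum.cartesian_product case_prod_beta)
    also have "\<dots> = (\<Sum>w\<in>W. \<Sum>t\<in>T. pmf D (w,t))"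
      using fV KV by (simp add: p_def sum_distrib_left[symmetric] sum_pmf_eq_1)
    also have "\<dots> = 1" using fW sD by (simp add: sum.cartesian_product sum_pmf_eq_1)
    finally have sp: "(\<Sum>x\<in>W \<times> (T \<times> V). p (fst x) (fst (snd x)) (snd (snd x))) = 1" .
    have "(\<Sum>x\<in>W \<times> (T \<times> V). q (fst x) (fst (snd x)) (snd (snd x))) = (\<Sum>w\<in>W. \<Sum>t\<in>T. \<Sum>v\<in>V. q w t v)"
      by (simp add: sum.cartesian_product case_prod_beta)
    also have "\<dots> = (\<Sum>w\<in>W. \<Sum>v\<in>V. pmf D' (w,v) / ?DV v * (\<Sum>t\<in>T. ?DT t * pmf (K t) v))"
      by (simp add: q_def sum.swap[of _ T V] sum_distrib_left mult_ac)
    also have "\<dots> = (\<Sum>w\<in>W. \<Sum>v\<in>V. pmf D' (w,v) / ?DV v * ?DV v)" by (simp add: pV)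
    also have "\<dots> \<le> (\<Sum>w\<in>W. \<Sum>v\<in>V. pmf D' (w,v))"
      by (intro sum_mono) (auto simp: divide_simps)
    also have "\<dots> = 1" using fW fV sD' by (simp add: sum.cartesian_product sum_pmf_eq_1)
    finally show "(\<Sum>x\<in>W \<times> (T \<times> V). q (fst x) (fst (snd x)) (snd (snd x))) \<le> (\<Sum>x\<in>W \<times> (T \<times> V). p (fst x) (fst (snd x)) (snd (snd x)))"
      using sp by simp
  qed
  have miD: "mi D = (\<Sum>w\<in>W. \<Sum>t\<in>T. \<Sum>v\<in>V. p w t v * log 2 (pmf D (w,t) / (?DW w * ?DT t)))"
  proof -
    have "mi D = (\<Sum>w\<in>W. \<Sum>t\<in>T. pmf D (w,t) * log 2 (pmf D (w,t) / (?DW w * ?DT t)))"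
      using mi_superset[OF fW sD] .
    also have "\<dots> = (\<Sum>w\<in>W. \<Sum>t\<in>T. (\<Sum>v\<in>V. pmf (K t) v) * (pmf D (w,t) * log 2 (pmf D (w,t) / (?DW w * ?DT t))))"
      using fV KV by (simp add: sum_pmf_eq_1)
    also have "\<dots> = (\<Sum>w\<in>W. \<Sum>t\<in>T. \<Sum>v\<in>V. p w t v * log 2 (pmf D (w,t) / (?DW w * ?DT t)))"
      by (simp add: p_def sum_distrib_right mult_ac)
    finally show ?thesis .
  qed
  have miD': "mi D' = (\<Sum>w\<in>W. \<Sum>t\<in>T. \<Sum>v\<in>V. p w t v * log 2 (pmf D' (w,v) / (?DW w * ?DV v)))"
  proof -
    have "mi D' = (\<Sum>w\<in>W. \<Sum>v\<in>V. pmf D' (w,v) * log 2 (pmf D' (w,v) / (?DW w * ?DV v)))"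
      using mi_superset[OF fW(1) fV sD'] by (simp add: mt)
    also have "\<dots> = (\<Sum>w\<in>W. \<Sum>v\<in>V. \<Sum>t\<in>T. p w t v * log 2 (pmf D' (w,v) / (?DW w * ?DV v)))"
      by (simp add: pD' p_def sum_distrib_right)
    also have "\<dots> = (\<Sum>w\<in>W. \<Sum>t\<in>T. \<Sum>v\<in>V. p w t v * log 2 (pmf D' (w,v) / (?DW w * ?DV v)))"
      by (simp add: sum.swap[of _ V T])
    finally show ?thesis .
  qed
  have "mi D - mi D' = (\<Sum>w\<in>W. \<Sum>t\<in>T. \<Sum>v\<in>V. - (p w t v * log 2 (q w t v / p w t v)))"
    unfolding miD miD' sum_subtractf[symmetric]
  proof (intro sum.cong refl)
    fix w t v assume wtv: "w \<in> W" "t \<in> T" "v \<in> V"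
    show "p w t v * log 2 (pmf D (w,t) / (?DW w * ?DT t)) - p w t v * log 2 (pmf D' (w,v) / (?DW w * ?DV v))
          = - (p w t v * log 2 (q w t v / p w t v))"
    proof (cases "0 < p w t v")
      case True
      note P = pos[OF wtv True]
      have e: "q w t v / p w t v = (pmf D' (w,v) * ?DT t) / (?DV v * pmf D (w,t))"
        using P by (simp add: q_def p_def field_simps)
      show ?thesis using P unfolding e
        by (simp add: log_div_pos log_mult_pos algebra_simps)
    next
      case False
      moreover have "0 \<le> p w t v" by (simp add: p_def)
      ultimately have "p w t v = 0" by simp
      thus ?thesis by simp
    qed
  qed
  also have "\<dots> = - (\<Sum>x\<in>W \<times> (T \<times> V). p (fst x) (fst (snd x)) (snd (snd x)) * log 2 (q (fst x) (fst (snd x)) (snd (snd x)) / p (fst x) (fst (snd x)) (snd (snd x))))"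
    by (simp add: sum.cartesian_product case_prod_beta sum_negf)
  finally show ?thesis using gib by (simp add: D'_def)
qed




lemma ent_map_inj:
  assumes "inj_on f (set_pmf P)" "finite (set_pmf P)"
  shows "ent (map_pmf f P) = ent P"
proof -
  have "ent (map_pmf f P) = (\<Sum>y\<in>f ` set_pmf P. - (pmf (map_pmf f P) y * log 2 (pmf (map_pmf f P) y)))"
    by (simp add: ent_def)
  also have "\<dots> = (\<Sum>x\<in>set_pmf P. - (pmf (map_pmf f P) (f x) * log 2 (pmf (map_pmf f P) (f x))))"
    using assms(1) by (rule sum.reindex[unfolded o_def])
  also have "\<dots> = ent P" unfolding ent_def using assms(1) by (intro sum.cong refl) (simp add: pmf_map_inj)
  finally show ?thesis .
qed

lemma ent_pair:
  assumes fP: "finite (set_pmf P)" and fQ: "finite (set_pmf Q)"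
  shows "ent (pair_pmf P Q) = ent P + ent Q"
proof -
  let ?A = "set_pmf P" and ?B = "set_pmf Q"
  have "ent (pair_pmf P Q) = (\<Sum>a\<in>?A. \<Sum>b\<in>?B. - (pmf P a * pmf Q b * log 2 (pmf P a * pmf Q b)))"
    unfolding ent_def set_pair_pmf sum.cartesian_product by (rule sum.cong) (auto simp: pmf_pair)
  also have "\<dots> = (\<Sum>a\<in>?A. \<Sum>b\<in>?B. pmf Q b * (- (pmf P a * log 2 (pmf P a))) + pmf P a * (- (pmf Q b * log 2 (pmf Q b))))"
    by (intro sum.cong refl) (simp add: pmf_positive log_mult_pos algebra_simps)
  also have "\<dots> = (\<Sum>a\<in>?A. (\<Sum>b\<in>?B. pmf Q b) * (- (pmf P a * log 2 (pmf P a))) + pmf P a * (\<Sum>b\<in>?B. - (pmf Q b * log 2 (pmf Q b))))"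
    by (simp only: sum.distrib sum_distrib_left sum_distrib_right)
  also have "\<dots> = (\<Sum>a\<in>?A. (\<Sum>b\<in>?B. pmf Q b) * (- (pmf P a * log 2 (pmf P a))) + pmf P a * ent Q)"
    by (simp only: ent_def)
  also have "\<dots> = ent P + (\<Sum>a\<in>?A. pmf P a) * ent Q"
    using fQ by (simp add: sum_pmf_eq_1 sum.distrib[symmetric] ent_def[of P] sum_distrib_right)
  also have "\<dots> = ent P + ent Q" using fP by (simp add: sum_pmf_eq_1)
  finally show ?thesis .
qed

definition xorf :: "(nat \<Rightarrow> bool) \<Rightarrow> (nat \<Rightarrow> bool) \<Rightarrow> (nat \<Rightarrow> bool)" where
  "xorf x y = (\<lambda>i. x i \<noteq> y i)"

lemma xorf_inj: "inj (xorf x)" "inj (\<lambda>y. xorf y x)"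
  by (auto simp: inj_def xorf_def fun_eq_iff)

lemma xorf_assoc: "xorf x (xorf e w) = xorf (xorf x e) w"
  by (auto simp: xorf_def fun_eq_iff)

definition conv :: "(nat \<Rightarrow> bool) pmf \<Rightarrow> (nat \<Rightarrow> bool) pmf \<Rightarrow> (nat \<Rightarrow> bool) pmf" where
  "conv P Q = bind_pmf P (\<lambda>x. map_pmf (xorf x) Q)"

lemma conv_comm: "conv P R = bind_pmf R (\<lambda>w. map_pmf (\<lambda>x. xorf x w) P)"
  unfolding conv_def map_pmf_def by (rule bind_commute_pmf)

lemma finite_conv: "finite (set_pmf P) \<Longrightarrow> finite (set_pmf Q) \<Longrightarrow> finite (set_pmf (conv P Q))"
  by (simp add: conv_def set_bind_pmf)

lemma ent_shift: "finite (set_pmf P) \<Longrightarrow> ent (map_pmf (\<lambda>x. xorf x w) P) = ent P"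
  by (rule ent_map_inj) (auto intro: inj_on_subset[OF xorf_inj(2)])

lemma ent_conv_ge:
  assumes fP: "finite (set_pmf P)" and fR: "finite (set_pmf R)"
  shows "ent P \<le> ent (conv P R)"
proof -
  let ?G = "\<lambda>w. map_pmf (\<lambda>x. xorf x w) P"
  have "0 \<le> mi (bind_pmf R (\<lambda>w. map_pmf (Pair w) (?G w)))"
    using fP fR by (intro mi_nonneg) (simp add: set_bind_pmf)
  also have "\<dots> = ent (bind_pmf R ?G) - (\<Sum>w\<in>set_pmf R. pmf R w * ent (?G w))"
    using fP fR by (intro mix) auto
  also have "(\<Sum>w\<in>set_pmf R. pmf R w * ent (?G w)) = ent P"
    using fP fR by (simp add: ent_shift sum_distrib_right[symmetric] sum_pmf_eq_1)
  finally show ?thesis by (simp add: conv_comm)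
qed

lemma ent_conv_dp:
  assumes fP: "finite (set_pmf P)" and fQ: "finite (set_pmf Q)" and fR: "finite (set_pmf R)"
  shows "ent (conv (conv P Q) R) - ent (conv P Q) \<le> ent (conv Q R) - ent Q"
proof -
  define D where "D = bind_pmf R (\<lambda>w. map_pmf (Pair w) (map_pmf (\<lambda>e. xorf e w) Q))"
  define D' where "D' = bind_pmf D (\<lambda>(w,t). map_pmf (Pair w) (map_pmf (\<lambda>x. xorf x t) P))"
  have fD: "finite (set_pmf D)" using fQ fR by (simp add: D_def set_bind_pmf)
  have "mi D = ent (bind_pmf R (\<lambda>w. map_pmf (\<lambda>e. xorf e w) Q)) - (\<Sum>w\<in>set_pmf R. pmf R w * ent (map_pmf (\<lambda>e. xorf e w) Q))"
    unfolding D_def using fQ fR by (intro mix) auto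
  also have "\<dots> = ent (conv Q R) - ent Q"
    using fQ fR by (simp add: ent_shift sum_distrib_right[symmetric] sum_pmf_eq_1 conv_comm)
  finally have miD: "mi D = ent (conv Q R) - ent Q" .
  have "D' = bind_pmf R (\<lambda>w. map_pmf (Pair w) (map_pmf (\<lambda>u. xorf u w) (conv P Q)))"
  proof -
    have "D' = bind_pmf R (\<lambda>w. bind_pmf Q (\<lambda>e. bind_pmf P (\<lambda>x. return_pmf (w, xorf x (xorf e w)))))"
      by (simp add: D'_def D_def map_pmf_def bind_assoc_pmf bind_return_pmf)
    also have "\<dots> = bind_pmf R (\<lambda>w. bind_pmf P (\<lambda>x. bind_pmf Q (\<lambda>e. return_pmf (w, xorf (xorf x e) w))))"
      by (subst bind_commute_pmf) (simp add: xorf_assoc)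
    also have "\<dots> = bind_pmf R (\<lambda>w. map_pmf (Pair w) (map_pmf (\<lambda>u. xorf u w) (conv P Q)))"
      by (simp add: conv_def map_pmf_def bind_assoc_pmf bind_return_pmf)
    finally show ?thesis .
  qed
  hence "mi D' = ent (conv (conv P Q) R) - (\<Sum>w\<in>set_pmf R. pmf R w * ent (map_pmf (\<lambda>u. xorf u w) (conv P Q)))"
    using fP fQ fR finite_conv by (simp add: mix conv_comm[of "conv P Q"])
  also have "\<dots> = ent (conv (conv P Q) R) - ent (conv P Q)"
    using fP fQ fR finite_conv[OF fP fQ] by (simp add: ent_shift sum_distrib_right[symmetric] sum_pmf_eq_1)
  finally have miD': "mi D' = ent (conv (conv P Q) R) - ent (conv P Q)" .
  have "mi D' \<le> mi D" unfolding D'_def using fD fP by (intro dpi) auto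
  thus ?thesis using miD miD' by simp
qed




lemma ent_bern: "0 \<le> r \<Longrightarrow> r \<le> 1 \<Longrightarrow> ent (bernoulli_pmf r) = bin_entropy r"
  by (subst ent_superset[of UNIV]) (auto simp: UNIV_bool bin_entropy_def)

lemma ent_return: "ent (return_pmf x) = 0"
  by (simp add: ent_def)

lemma finite_funs: "finite A \<Longrightarrow> finite {f :: 'a \<Rightarrow> bool. \<forall>x. x \<notin> A \<longrightarrow> f x = False}"
proof -
  assume A: "finite A"
  have "{f :: 'a \<Rightarrow> bool. \<forall>x. x \<notin> A \<longrightarrow> f x = False} \<subseteq> (\<lambda>S x. x \<in> S) ` Pow A"
  proof
    fix f :: "'a \<Rightarrow> bool" assume "f \<in> {f. \<forall>x. x \<notin> A \<longrightarrow> f x = False}"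
    hence "f = (\<lambda>x. x \<in> {x. f x})" "{x. f x} \<in> Pow A" by auto
    thus "f \<in> (\<lambda>S x. x \<in> S) ` Pow A" by blast
  qed
  thus ?thesis using A by (meson finite_Pow_iff finite_imageI finite_subset)
qed

lemma finite_Pi_pmf: "finite A \<Longrightarrow> finite (set_pmf (Pi_pmf A False p))"
  using set_Pi_pmf_subset[of A False p] finite_funs[of A] by (auto intro: finite_subset)

lemma ent_Pi:
  assumes "finite A" "\<And>i. i \<in> A \<Longrightarrow> 0 \<le> r i \<and> r i \<le> 1"
  shows "ent (Pi_pmf A False (\<lambda>i. bernoulli_pmf (r i))) = (\<Sum>i\<in>A. bin_entropy (r i))"
  using assms
proof (induction A rule: finite_induct)
  case empty
  then show ?case by (simp add: ent_return)
next
  case (insert x A)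
  let ?P = "Pi_pmf A False (\<lambda>i. bernoulli_pmf (r i))"
  have fP: "finite (set_pmf ?P)" using insert by (simp add: finite_Pi_pmf)
  have inj: "inj_on (\<lambda>(y,f). f(x:=y)) (set_pmf (pair_pmf (bernoulli_pmf (r x)) ?P))"
  proof (rule inj_onI, clarify)
    fix y f y' f'
    assume a: "(y,f) \<in> set_pmf (pair_pmf (bernoulli_pmf (r x)) ?P)" "(y',f') \<in> set_pmf (pair_pmf (bernoulli_pmf (r x)) ?P)"
      and e: "f(x := y) = f'(x := y')"
    have "f x = False" "f' x = False" using a insert.hyps set_Pi_pmf_subset[of A False "\<lambda>i. bernoulli_pmf (r i)"]
      by (auto simp: set_pair_pmf)
    note ff = this
    have "y = y'" using fun_cong[OF e, of x] by simp
    moreover have "f = f'"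
    proof
      fix z show "f z = f' z" using fun_cong[OF e, of z] ff by (cases "z = x") auto
    qed
    ultimately show "y = y' \<and> f = f'" by simp
  qed
  have "ent (Pi_pmf (insert x A) False (\<lambda>i. bernoulli_pmf (r i))) = ent (pair_pmf (bernoulli_pmf (r x)) ?P)"
    using insert.hyps by (simp add: Pi_pmf_insert ent_map_inj[OF inj] set_pair_pmf fP)
  also have "\<dots> = bin_entropy (r x) + ent ?P" using fP insert.prems by (simp add: ent_pair ent_bern)
  also have "ent ?P = (\<Sum>i\<in>A. bin_entropy (r i))" using insert by simp
  finally show ?case using insert.hyps by simp
qed

lemma bern_xor:
  assumes "0 \<le> a" "a \<le> 1" "0 \<le> c" "c \<le> 1"
  shows "bind_pmf (bernoulli_pmf a) (\<lambda>x. map_pmf (\<lambda>e. x \<noteq> e) (bernoulli_pmf c)) = bernoulli_pmf (a + c - 2*a*c)"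
proof (rule pmf_eqI)
  fix y :: bool
  have m: "pmf (map_pmf (\<lambda>e. x \<noteq> e) (bernoulli_pmf c)) y = pmf (bernoulli_pmf c) (x \<noteq> y)" for x
  proof -
    have "(\<lambda>e. x \<noteq> e) -` {y} = {x \<noteq> y}" by auto
    thus ?thesis by (simp add: pmf_map measure_pmf_single)
  qed
  have e1: "a + c - 2*a*c = a*(1-c) + c*(1-a)" by (simp add: algebra_simps)
  have e2: "1 - (a + c - 2*a*c) = (1-a)*(1-c) + a*c" by (simp add: algebra_simps)
  have "0 \<le> a*(1-c) + c*(1-a)" "0 \<le> (1-a)*(1-c) + a*c" using assms by simp_all
  hence r: "0 \<le> a + c - 2*a*c" "a + c - 2*a*c \<le> 1" using e1 e2 by linarith+
  show "pmf (bind_pmf (bernoulli_pmf a) (\<lambda>x. map_pmf (\<lambda>e. x \<noteq> e) (bernoulli_pmf c))) y = pmf (bernoulli_pmf (a + c - 2*a*c)) y"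
  proof -
    have "pmf (bind_pmf (bernoulli_pmf a) (\<lambda>x. map_pmf (\<lambda>e. x \<noteq> e) (bernoulli_pmf c))) y
       = (\<Sum>x\<in>UNIV. pmf (bernoulli_pmf a) x * pmf (bernoulli_pmf c) (x \<noteq> y))"
      by (subst pmf_bind_sum[of UNIV], simp, simp, rule sum.cong[OF refl], subst m, rule refl)
    also have "\<dots> = pmf (bernoulli_pmf (a + c - 2*a*c)) y"
      using assms r by (cases y) (simp_all add: UNIV_bool algebra_simps)
    finally show ?thesis .
  qed
qed




lemma Pi_conv:
  assumes A: "finite A"
  shows "conv (Pi_pmf A False a) (Pi_pmf A False c) = Pi_pmf A False (\<lambda>i. bind_pmf (a i) (\<lambda>x. map_pmf (\<lambda>e. x \<noteq> e) (c i)))"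
proof -
  have "Pi_pmf A False (\<lambda>i. bind_pmf (a i) (\<lambda>x. map_pmf (\<lambda>e. x \<noteq> e) (c i)))
      = bind_pmf (Pi_pmf A False a) (\<lambda>f. Pi_pmf A False (\<lambda>i. map_pmf (\<lambda>e. f i \<noteq> e) (c i)))"
    using A by (rule Pi_pmf_bind)
  also have "\<dots> = bind_pmf (Pi_pmf A False a) (\<lambda>f. bind_pmf (Pi_pmf A False c) (\<lambda>g. return_pmf (\<lambda>i. if i \<in> A then f i \<noteq> g i else False)))"
  proof (intro bind_pmf_cong refl)
    fix f
    have "Pi_pmf A False (\<lambda>i. map_pmf (\<lambda>e. f i \<noteq> e) (c i)) = Pi_pmf A False (\<lambda>i. bind_pmf (c i) (\<lambda>e. return_pmf (f i \<noteq> e)))"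
      by (simp add: map_pmf_def)
    also have "\<dots> = bind_pmf (Pi_pmf A False c) (\<lambda>g. Pi_pmf A False (\<lambda>i. return_pmf (f i \<noteq> g i)))"
      using A by (rule Pi_pmf_bind)
    also have "\<dots> = bind_pmf (Pi_pmf A False c) (\<lambda>g. return_pmf (\<lambda>i. if i \<in> A then f i \<noteq> g i else False))"
      using A by simp
    finally show "Pi_pmf A False (\<lambda>i. map_pmf (\<lambda>e. f i \<noteq> e) (c i)) = \<dots>" .
  qed
  also have "\<dots> = conv (Pi_pmf A False a) (Pi_pmf A False c)"
    unfolding conv_def map_pmf_def
  proof (intro bind_pmf_cong refl)
    fix f g assume f: "f \<in> set_pmf (Pi_pmf A False a)" and g: "g \<in> set_pmf (Pi_pmf A False c)"
    have "\<forall>x. x \<notin> A \<longrightarrow> f x = False" "\<forall>x. x \<notin> A \<longrightarrow> g x = False"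
      using f g set_Pi_pmf_subset[OF A, of False a] set_Pi_pmf_subset[OF A, of False c] by blast+
    thus "return_pmf (\<lambda>i. if i \<in> A then f i \<noteq> g i else False) = return_pmf (xorf f g)"
      by (auto simp: xorf_def fun_eq_iff)
  qed
  finally show ?thesis ..
qed

definition cf :: "real \<Rightarrow> real \<Rightarrow> real" where
  "cf a b = (if a = 1/2 then 0 else (b - a) / (1 - 2*a))"

lemma cf_props:
  assumes "0 \<le> a" "a \<le> b" "b \<le> 1/2"
  shows "0 \<le> cf a b" "cf a b \<le> 1" "a + cf a b - 2*a*cf a b = b"
proof -
  show "0 \<le> cf a b" using assms by (auto simp: cf_def)
  show "cf a b \<le> 1" using assms by (auto simp: cf_def divide_simps)
  show "a + cf a b - 2*a*cf a b = b" using assms by (auto simp: cf_def divide_simps algebra_simps)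
qed

lemma noise_split:
  assumes "0 \<le> p1" "p1 \<le> ps1" "ps1 \<le> 1/2" "0 \<le> p2" "p2 \<le> ps2" "ps2 \<le> 1/2"
  shows "noise_pmf N B ps1 ps2 s = conv (noise_pmf N B p1 p2 s)
     (Pi_pmf {..<N*B} False (\<lambda>i. bernoulli_pmf (cf (xover p1 p2 (s (i div N))) (xover ps1 ps2 (s (i div N))))))"
proof -
  have c: "0 \<le> xover p1 p2 t" "xover p1 p2 t \<le> xover ps1 ps2 t" "xover ps1 ps2 t \<le> 1/2" for t
    using assms by (auto simp: xover_def)
  have b: "bernoulli_pmf (xover ps1 ps2 t) = bind_pmf (bernoulli_pmf (xover p1 p2 t))
       (\<lambda>x. map_pmf (\<lambda>e. x \<noteq> e) (bernoulli_pmf (cf (xover p1 p2 t) (xover ps1 ps2 t))))" for t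
    using c[of t] cf_props[OF c[of t]] by (subst bern_xor) auto
  show ?thesis unfolding noise_pmf_def by (subst Pi_conv) (simp_all add: b)
qed

lemma ent_noise:
  assumes "0 \<le> a" "a \<le> 1" "0 \<le> b" "b \<le> 1"
  shows "ent (noise_pmf N B a b s) = (\<Sum>i<N*B. bin_entropy (xover a b (s (i div N))))"
  unfolding noise_pmf_def using assms by (intro ent_Pi) (auto simp: xover_def)

lemma conv_assoc: "conv P (conv Q R) = conv (conv P Q) R"
  by (simp add: conv_def map_pmf_def bind_assoc_pmf bind_return_pmf xorf_assoc)

lemma conv_bind: "conv (bind_pmf U F) R = bind_pmf U (\<lambda>m. conv (F m) R)"
  by (simp add: conv_def bind_assoc_pmf)

lemma per_s:
  assumes fU: "finite (set_pmf U)" and fP: "\<And>m. finite (set_pmf (P m))"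
    and fQ: "finite (set_pmf Q)" and fR: "finite (set_pmf R)"
  shows "mi (bind_pmf U (\<lambda>m. map_pmf (Pair m) (conv (P m) Q)))
       - mi (bind_pmf U (\<lambda>m. map_pmf (Pair m) (conv (P m) (conv Q R)))) \<le> ent (conv Q R) - ent Q"
proof -
  let ?G = "\<lambda>m. conv (P m) Q"
  have fG: "finite (set_pmf (?G m))" for m using fP fQ by (simp add: finite_conv)
  have fB: "finite (set_pmf (bind_pmf U ?G))" using fU fG by (simp add: set_bind_pmf)
  have e1: "mi (bind_pmf U (\<lambda>m. map_pmf (Pair m) (?G m))) = ent (bind_pmf U ?G) - (\<Sum>m\<in>set_pmf U. pmf U m * ent (?G m))"
    using fU fG by (rule mix)
  have e2: "mi (bind_pmf U (\<lambda>m. map_pmf (Pair m) (conv (?G m) R))) = ent (bind_pmf U (\<lambda>m. conv (?G m) R)) - (\<Sum>m\<in>set_pmf U. pmf U m * ent (conv (?G m) R))"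
    using fU fG fR by (intro mix) (auto simp: finite_conv)
  have "ent (bind_pmf U ?G) \<le> ent (bind_pmf U (\<lambda>m. conv (?G m) R))"
    using ent_conv_ge[OF fB fR] by (simp add: conv_bind)
  moreover have "(\<Sum>m\<in>set_pmf U. pmf U m * ent (conv (?G m) R)) - (\<Sum>m\<in>set_pmf U. pmf U m * ent (?G m))
      \<le> (\<Sum>m\<in>set_pmf U. pmf U m * (ent (conv Q R) - ent Q))"
    unfolding sum_subtractf[symmetric] right_diff_distrib[symmetric]
    using ent_conv_dp[OF fP fQ fR] by (intro sum_mono mult_left_mono) auto
  moreover have "(\<Sum>m\<in>set_pmf U. pmf U m * (ent (conv Q R) - ent Q)) = ent (conv Q R) - ent Q"
    using fU by (simp add: sum_distrib_right[symmetric] sum_pmf_eq_1)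
  ultimately show ?thesis using e1 e2 by (simp add: conv_assoc)
qed




lemma prob_sum:
  assumes "finite (set_pmf M)"
  shows "measure_pmf.prob M A = (\<Sum>x\<in>set_pmf M. if x \<in> A then pmf M x else 0)"
proof -
  have "measure_pmf.prob M A = measure_pmf.prob M (A \<inter> set_pmf M)" by (simp add: measure_Int_set_pmf)
  also have "\<dots> = sum (pmf M) (set_pmf M \<inter> A)" using assms by (simp add: measure_measure_pmf_finite Int_commute)
  also have "\<dots> = (\<Sum>x\<in>set_pmf M. if x \<in> A then pmf M x else 0)"
    using assms by (simp add: sum.inter_restrict)
  finally show ?thesis .
qed

lemma pmf_map_inj_other:
  assumes "inj f"
  shows "pmf (map_pmf f X) (f x) = pmf X x"
  using assms by (rule pmf_map_inj')

lemma pmf_map_ins: "pmf (map_pmf (\<lambda>(m,c). (m,s',c)) X) (m,s,c) = (if s' = s then pmf X (m,c) else 0)"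
proof (cases "s' = s")
  case True
  have "inj (\<lambda>(m,c). (m,s,c))" by (auto simp: inj_def)
  then show ?thesis using True pmf_map_inj'[of "\<lambda>(m,c). (m,s,c)" X "(m,c)"] by simp
next
  case False
  then have "(m,s,c) \<notin> set_pmf (map_pmf (\<lambda>(m,c). (m,s',c)) X)" by auto
  then show ?thesis using False by (simp add: set_pmf_eq)
qed

lemma pmf_map_ins1: "pmf (map_pmf (\<lambda>m. (m,s')) X) (m,s) = (if s' = s then pmf X m else 0)"
proof (cases "s' = s")
  case True
  have "inj (\<lambda>m. (m,s))" by (auto simp: inj_def)
  then show ?thesis using True pmf_map_inj'[of "\<lambda>m. (m,s)" X m] by simp
next
  case False
  then have "(m,s) \<notin> set_pmf (map_pmf (\<lambda>m. (m,s')) X)" by auto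
  then show ?thesis using False by (simp add: set_pmf_eq)
qed

lemma pmf_bind_tag:
  assumes fS: "finite (set_pmf S)"
    and h: "\<And>s' s x. pmf (F s' (X s')) (g x s) = (if s' = s then pmf (X s') x else 0)"
  shows "pmf (bind_pmf S (\<lambda>s. F s (X s))) (g x s) = pmf S s * pmf (X s) x"
proof -
  have "pmf (bind_pmf S (\<lambda>s. F s (X s))) (g x s) = (\<Sum>s'\<in>set_pmf S. pmf S s' * pmf (F s' (X s')) (g x s))"
    using fS by (intro pmf_bind_sum) auto
  also have "\<dots> = (\<Sum>s'\<in>set_pmf S. if s' = s then pmf S s * pmf (X s) x else 0)"
    by (intro sum.cong refl) (simp add: h)
  also have "\<dots> = pmf S s * pmf (X s) x" using fS by (simp add: set_pmf_eq)
  finally show ?thesis .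
qed

lemma cmi_decomp:
  assumes fS: "finite (set_pmf S)" and fD: "\<And>s. s \<in> set_pmf S \<Longrightarrow> finite (set_pmf (D s))"
  shows "cond_mutual_info (bind_pmf S (\<lambda>s. map_pmf (\<lambda>(m,c). (m,s,c)) (D s))) = (\<Sum>s\<in>set_pmf S. pmf S s * mi (D s))"
proof -
  define J where "J = bind_pmf S (\<lambda>s. map_pmf (\<lambda>(m,c). (m,s,c)) (D s))"
  have pJ: "pmf J (m,s,c) = pmf S s * pmf (D s) (m,c)" for m s c
  proof -
    have h: "\<And>s' s x. pmf (map_pmf (\<lambda>(m,c). (m,s',c)) (D s')) (fst x, s, snd x) = (if s' = s then pmf (D s') x else 0)"
      by (case_tac x) (simp add: pmf_map_ins)
    show ?thesis unfolding J_def using pmf_bind_tag[OF fS, where F="\<lambda>s X. map_pmf (\<lambda>(m,c). (m,s,c)) X" and X=D and g="\<lambda>x s. (fst x,s,snd x)", OF h, of "(m,c)" s]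
      by simp
  qed
  have mB: "map_pmf (\<lambda>(a,b,c). b) J = S"
  proof -
    have "\<And>s. map_pmf (\<lambda>(a,b,c). b) (map_pmf (\<lambda>(m,c). (m,s,c)) (D s)) = return_pmf s"
      by (simp add: pmf.map_comp o_def case_prod_beta map_pmf_const)
    thus ?thesis by (simp add: J_def map_bind_pmf bind_return_pmf')
  qed
  have mAB: "map_pmf (\<lambda>(a,b,c). (a,b)) J = bind_pmf S (\<lambda>s. map_pmf (\<lambda>m. (m,s)) (map_pmf fst (D s)))"
    by (simp add: J_def map_bind_pmf pmf.map_comp o_def case_prod_beta)
  have mBC: "map_pmf (\<lambda>(a,b,c). (b,c)) J = bind_pmf S (\<lambda>s. map_pmf (Pair s) (map_pmf snd (D s)))"
    by (simp add: J_def map_bind_pmf pmf.map_comp o_def case_prod_beta)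
  have pAB: "pmf (map_pmf (\<lambda>(a,b,c). (a,b)) J) (m,s) = pmf S s * pmf (map_pmf fst (D s)) m" for m s
    unfolding mAB using pmf_bind_tag[OF fS, where F="\<lambda>s X. map_pmf (\<lambda>m. (m,s)) X" and X="\<lambda>s. map_pmf fst (D s)" and g="\<lambda>m s. (m,s)"]
    by (simp add: pmf_map_ins1)
  have pBC: "pmf (map_pmf (\<lambda>(a,b,c). (b,c)) J) (s,c) = pmf S s * pmf (map_pmf snd (D s)) c" for s c
    unfolding mBC using pmf_bind_tag[OF fS, where F="\<lambda>s X. map_pmf (Pair s) X" and X="\<lambda>s. map_pmf snd (D s)" and g="\<lambda>c s. (s,c)"]
    by (simp add: pmf_map_Pair)
  have sJ: "set_pmf J = (\<lambda>(s,(m,c)). (m,s,c)) ` Sigma (set_pmf S) (\<lambda>s. set_pmf (D s))"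
    by (auto simp: J_def set_bind_pmf image_iff) force
  have inj: "inj_on (\<lambda>(s,(m,c)). (m,s,c)) (Sigma (set_pmf S) (\<lambda>s. set_pmf (D s)))"
    by (auto simp: inj_on_def)
  have "cond_mutual_info J = (\<Sum>(s,(m,c))\<in>Sigma (set_pmf S) (\<lambda>s. set_pmf (D s)).
      pmf J (m,s,c) * log 2 ((pmf J (m,s,c) * pmf (map_pmf (\<lambda>(a,b,c). b) J) s) /
        (pmf (map_pmf (\<lambda>(a,b,c). (a,b)) J) (m,s) * pmf (map_pmf (\<lambda>(a,b,c). (b,c)) J) (s,c))))"
    unfolding cond_mutual_info_def sJ sum.reindex[OF inj] by (simp add: case_prod_beta o_def)
  also have "\<dots> = (\<Sum>(s,(m,c))\<in>Sigma (set_pmf S) (\<lambda>s. set_pmf (D s)). pmf S s * (pmf (D s) (m,c) *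
       log 2 (pmf (D s) (m,c) / (pmf (map_pmf fst (D s)) m * pmf (map_pmf snd (D s)) c))))"
  proof (intro sum.cong refl, clarify)
    fix s m c assume s: "s \<in> set_pmf S"
    have S0: "pmf S s \<noteq> 0" using s by (simp add: set_pmf_eq)
    have e: "pmf S s * pmf (D s) (m,c) * pmf S s / (pmf S s * pmf (map_pmf fst (D s)) m * (pmf S s * pmf (map_pmf snd (D s)) c))
      = pmf (D s) (m,c) / (pmf (map_pmf fst (D s)) m * pmf (map_pmf snd (D s)) c)"
      using S0 by (simp add: field_simps)
    show "pmf J (m,s,c) * log 2 ((pmf J (m,s,c) * pmf (map_pmf (\<lambda>(a,b,c). b) J) s) /
        (pmf (map_pmf (\<lambda>(a,b,c). (a,b)) J) (m,s) * pmf (map_pmf (\<lambda>(a,b,c). (b,c)) J) (s,c))) =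
      pmf S s * (pmf (D s) (m,c) * log 2 (pmf (D s) (m,c) / (pmf (map_pmf fst (D s)) m * pmf (map_pmf snd (D s)) c)))"
      unfolding pJ mB pAB pBC e by simp
  qed
  also have "\<dots> = (\<Sum>s\<in>set_pmf S. \<Sum>(m,c)\<in>set_pmf (D s). pmf S s * (pmf (D s) (m,c) *
       log 2 (pmf (D s) (m,c) / (pmf (map_pmf fst (D s)) m * pmf (map_pmf snd (D s)) c))))"
    by (rule sum.Sigma[OF fS ballI[OF fD], symmetric])
  also have "\<dots> = (\<Sum>s\<in>set_pmf S. pmf S s * mi (D s))"
    by (simp add: mi_def sum_distrib_left case_prod_beta)
  finally show ?thesis by (simp add: J_def)
qed




lemma half_log: "0 < y \<Longrightarrow> y * log 2 ((1/2) / y) = - y - y * log 2 y"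
proof -
  assume y: "0 < y"
  have h: "log 2 ((1/2) / y) = - 1 - log 2 y" using y by (simp add: log_divide log_mult)
  show ?thesis by (simp only: h) (simp add: algebra_simps)
qed

lemma ent2:
  assumes "0 \<le> x" "x \<le> 1"
  shows "-1 \<le> x * log 2 x + (1 - x) * log 2 (1 - x)"
proof -
  let ?p = "\<lambda>b::bool. if b then x else 1 - x"
  have g: "(\<Sum>b\<in>UNIV. ?p b * log 2 ((1/2) / ?p b)) \<le> 0"
    using assms by (intro gibbs) (auto simp: UNIV_bool)
  have t: "?p b * log 2 ((1/2) / ?p b) = - ?p b - ?p b * log 2 (?p b)" for b
  proof (cases "?p b = 0")
    case False
    hence "0 < ?p b" using assms by (auto simp: less_eq_real_def)
    thus ?thesis by (rule half_log)
  next
    case True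
    show ?thesis by (simp only: True mult_zero_left)
  qed
  have "(\<Sum>b\<in>UNIV. ?p b * log 2 ((1/2) / ?p b)) = (\<Sum>b\<in>UNIV. - ?p b - ?p b * log 2 (?p b))"
    by (rule sum.cong[OF refl t])
  also have "\<dots> = -1 - (x * log 2 x + (1 - x) * log 2 (1 - x))" by (simp add: UNIV_bool)
  finally show ?thesis using g by linarith
qed

lemma fano:
  fixes K :: nat
  assumes K: "K \<ge> 1" and fG: "\<And>m. finite (set_pmf (G m))"
  shows "(1 - measure_pmf.prob (bind_pmf (pmf_of_set {..<K}) (\<lambda>m. map_pmf (Pair m) (G m))) {(m,c). h c \<noteq> m}) * log 2 K - 1
     \<le> mi (bind_pmf (pmf_of_set {..<K}) (\<lambda>m. map_pmf (Pair m) (G m)))"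
proof -
  define U where "U = pmf_of_set {..<K}"
  define D where "D = bind_pmf U (\<lambda>m. map_pmf (Pair m) (G m))"
  have "0 \<in> {..<K}" using K by simp
  hence Kne: "{..<K} \<noteq> {}" by blast
  have sU: "set_pmf U = {..<K}" using set_pmf_of_set[OF Kne finite_lessThan[of K]] by (simp add: U_def)
  have pU: "m \<in> set_pmf U \<Longrightarrow> pmf U m = 1 / K" for m using pmf_of_set[OF Kne finite_lessThan[of K], of m] sU by (simp add: U_def)
  have fD: "finite (set_pmf D)" using fG sU by (simp add: D_def set_bind_pmf)
  have m1: "map_pmf fst D = U"
    unfolding D_def by (simp add: map_bind_pmf pmf.map_comp o_def map_pmf_const bind_return_pmf')
  let ?DC = "map_pmf snd D"
  have fC: "finite (set_pmf ?DC)" using fD by simp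
  have aU: "fst x \<in> set_pmf U \<and> snd x \<in> set_pmf ?DC" if "x \<in> set_pmf D" for x
  proof -
    have "fst x \<in> set_pmf (map_pmf fst D)" using that by simp
    thus ?thesis using m1 that by simp
  qed
  define p where "p = pmf D"
  define q where "q = (\<lambda>x. pmf U (fst x) * pmf ?DC (snd x))"
  have pq: "0 < q x" if "x \<in> set_pmf D" for x
  proof -
    have "fst x \<in> set_pmf (map_pmf fst D)" "snd x \<in> set_pmf ?DC" using that by auto
    thus ?thesis unfolding q_def m1 by (simp add: pmf_positive)
  qed
  define B where "B = {x. h (snd x) = fst x}"
  define A1 where "A1 = set_pmf D \<inter> B"
  define A2 where "A2 = set_pmf D - B"
  have fA: "finite A1" "finite A2" using fD by (simp_all add: A1_def A2_def)
  have miD: "mi D = (\<Sum>x\<in>A1. p x * log 2 (p x / q x)) + (\<Sum>x\<in>A2. p x * log 2 (p x / q x))"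
    unfolding A1_def A2_def sum.Int_Diff[OF fD, symmetric]
    by (simp add: mi_def p_def q_def m1 case_prod_beta)
  define P1 where "P1 = sum p A1"
  define P2 where "P2 = sum p A2"
  define Q1 where "Q1 = sum q A1"
  define Q2 where "Q2 = sum q A2"
  have P12: "P1 + P2 = 1" unfolding P1_def P2_def A1_def A2_def sum.Int_Diff[OF fD, symmetric] p_def
    using fD by (simp add: sum_pmf_eq_1)
  have Pe: "measure_pmf.prob D {(m,c). h c \<noteq> m} = P2"
    unfolding prob_sum[OF fD] P2_def A2_def p_def B_def
    using fD by (simp add: sum.inter_filter Diff_eq case_prod_beta Int_def)
  have P1n: "0 \<le> P1" "0 \<le> P2" by (simp_all add: P1_def P2_def p_def sum_nonneg)
  have l1: "P1 * log 2 (P1 / Q1) \<le> (\<Sum>x\<in>A1. p x * log 2 (p x / q x))"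
    unfolding P1_def Q1_def using fA pq by (intro logsum) (auto simp: p_def A1_def q_def)
  have l2: "P2 * log 2 (P2 / Q2) \<le> (\<Sum>x\<in>A2. p x * log 2 (p x / q x))"
    unfolding P2_def Q2_def using fA pq by (intro logsum) (auto simp: p_def A2_def q_def)
  have Q1le: "Q1 \<le> 1 / K"
  proof -
    have inj: "inj_on snd A1" by (auto simp: inj_on_def A1_def B_def prod_eq_iff)
    have "Q1 = (\<Sum>x\<in>A1. 1 / K * pmf ?DC (snd x))"
      unfolding Q1_def q_def
    proof (intro sum.cong refl)
      fix x assume "x \<in> A1"
      hence "fst x \<in> set_pmf (map_pmf fst D)" by (simp add: A1_def)
      hence "fst x \<in> set_pmf U" using m1 by simp
      thus "pmf U (fst x) * pmf ?DC (snd x) = 1 / K * pmf ?DC (snd x)" by (simp add: pU)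
    qed
    also have "\<dots> = 1 / K * (\<Sum>c\<in>snd ` A1. pmf ?DC c)"
      by (simp add: sum_distrib_left sum.reindex[OF inj])
    also have "(\<Sum>c\<in>snd ` A1. pmf ?DC c) \<le> (\<Sum>c\<in>set_pmf ?DC. pmf ?DC c)"
      using fC by (intro sum_mono2) (auto simp: A1_def)
    also have "\<dots> = 1" using fC by (simp add: sum_pmf_eq_1)
    finally show ?thesis by (simp add: divide_right_mono)
  qed
  have Q2le: "Q2 \<le> 1"
  proof -
    have sub: "A2 \<subseteq> set_pmf U \<times> set_pmf ?DC"
    proof
      fix x assume "x \<in> A2"
      hence "x \<in> set_pmf D" by (simp add: A2_def)
      thus "x \<in> set_pmf U \<times> set_pmf ?DC" using aU[of x] by (cases x) auto
    qed
    have "Q2 \<le> (\<Sum>x\<in>set_pmf U \<times> set_pmf ?DC. q x)"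
      unfolding Q2_def using fC sU by (intro sum_mono2[OF _ sub]) (auto simp: q_def)
    also have "\<dots> = (\<Sum>m\<in>set_pmf U. pmf U m) * (\<Sum>c\<in>set_pmf ?DC. pmf ?DC c)"
      by (simp add: q_def sum_product sum.cartesian_product case_prod_beta)
    also have "\<dots> = 1" using fC sU by (simp add: sum_pmf_eq_1)
    finally show ?thesis .
  qed
  have s1: "P1 * log 2 K + P1 * log 2 P1 \<le> P1 * log 2 (P1 / Q1)"
  proof (cases "P1 = 0")
    case False
    hence P1p: "0 < P1" using P1n by simp
    have "\<exists>x\<in>A1. 0 < p x"
    proof (rule ccontr)
      assume "\<not> (\<exists>x\<in>A1. 0 < p x)"
      hence "\<forall>x\<in>A1. p x \<le> 0" by auto
      hence "P1 \<le> 0" unfolding P1_def by (meson sum_nonpos)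
      thus False using P1p by simp
    qed
    then obtain x where x: "x \<in> A1" "0 < p x" by blast
    have "q x \<le> Q1" unfolding Q1_def using fA x pq by (intro member_le_sum) (auto simp: A1_def q_def)
    moreover have "0 < q x" using x pq by (simp add: A1_def)
    ultimately have Q1p: "0 < Q1" by linarith
    have Kp: "0 < real K" using K by simp
    have "P1 / (1 / real K) \<le> P1 / Q1" using Q1le Q1p P1n Kp by (intro divide_left_mono) auto
    hence "K * P1 \<le> P1 / Q1" by (simp add: mult.commute)
    hence "log 2 (K * P1) \<le> log 2 (P1 / Q1)" using Kp P1p by (intro log_mono) auto
    hence "P1 * log 2 (K * P1) \<le> P1 * log 2 (P1 / Q1)" using P1p by (simp add: mult_left_mono)
    moreover have "log 2 (K * P1) = log 2 K + log 2 P1" using Kp P1p by (rule log_mult_pos)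
    ultimately show ?thesis by (simp add: distrib_left)
  qed simp
  have s2: "P2 * log 2 P2 \<le> P2 * log 2 (P2 / Q2)"
  proof (cases "P2 = 0")
    case False
    hence P2p: "0 < P2" using P1n by simp
    have "\<exists>x\<in>A2. 0 < p x"
    proof (rule ccontr)
      assume "\<not> (\<exists>x\<in>A2. 0 < p x)"
      hence "\<forall>x\<in>A2. p x \<le> 0" by auto
      hence "P2 \<le> 0" unfolding P2_def by (meson sum_nonpos)
      thus False using P2p by simp
    qed
    then obtain x where x: "x \<in> A2" "0 < p x" by blast
    have "q x \<le> Q2" unfolding Q2_def using fA x pq by (intro member_le_sum) (auto simp: A2_def q_def)
    moreover have "0 < q x" using x pq by (simp add: A2_def)
    ultimately have Q2p: "0 < Q2" by linarith
    have "P2 / 1 \<le> P2 / Q2" using Q2le Q2p P1n by (intro divide_left_mono) auto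
    hence "log 2 P2 \<le> log 2 (P2 / Q2)" using P2p by (intro log_mono) auto
    thus ?thesis using P2p by (simp add: mult_left_mono)
  qed simp
  have P1e: "1 - P1 = P2" using P12 by simp
  have "-1 \<le> P1 * log 2 P1 + (1 - P1) * log 2 (1 - P1)"
    using P12 P1n by (intro ent2) auto
  hence e2: "-1 \<le> P1 * log 2 P1 + P2 * log 2 P2" by (simp only: P1e)
  have "(1 - P2) * log 2 K = P1 * log 2 K" using P12 by simp
  hence "(1 - P2) * log 2 K - 1 \<le> mi D" using miD l1 l2 s1 s2 e2 by linarith
  thus ?thesis using Pe by (simp add: D_def U_def)
qed




definition trunc :: "nat \<Rightarrow> (nat \<Rightarrow> bool) \<Rightarrow> (nat \<Rightarrow> bool)" where
  "trunc L x = (\<lambda>i. if i < L then x i else False)"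

lemma noise_supp: "e \<in> set_pmf (noise_pmf N B a b s) \<Longrightarrow> N*B \<le> i \<Longrightarrow> \<not> e i"
  unfolding noise_pmf_def using set_Pi_pmf_subset[of "{..<N*B}" False "\<lambda>i. bernoulli_pmf (xover a b (s (i div N)))"]
  by force

lemma chan_xor: "(\<And>i. N*B \<le> i \<Longrightarrow> \<not> e i) \<Longrightarrow> chan_out N B x e = xorf (trunc (N*B) x) e"
  by (auto simp: chan_out_def xorf_def trunc_def fun_eq_iff)

lemma proj_gen:
  assumes supp: "\<And>s e i. e \<in> set_pmf (NN s) \<Longrightarrow> N*B \<le> i \<Longrightarrow> \<not> e i"
  shows "bind_pmf U (\<lambda>m. bind_pmf (f m) (\<lambda>x. bind_pmf S (\<lambda>s. bind_pmf (NN s) (\<lambda>e. return_pmf (m, s, chan_out N B x e)))))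
    = bind_pmf S (\<lambda>s. map_pmf (\<lambda>(m,c). (m,s,c)) (bind_pmf U (\<lambda>m. map_pmf (Pair m) (conv (map_pmf (trunc (N*B)) (f m)) (NN s)))))"
proof -
  have ch: "e \<in> set_pmf (NN s) \<Longrightarrow> chan_out N B x e = xorf (trunc (N*B) x) e" for e s x
    using supp by (intro chan_xor) auto
  have "bind_pmf U (\<lambda>m. bind_pmf (f m) (\<lambda>x. bind_pmf S (\<lambda>s. bind_pmf (NN s) (\<lambda>e. return_pmf (m, s, chan_out N B x e)))))
     = bind_pmf U (\<lambda>m. bind_pmf S (\<lambda>s. bind_pmf (f m) (\<lambda>x. bind_pmf (NN s) (\<lambda>e. return_pmf (m, s, chan_out N B x e)))))"
    by (intro bind_pmf_cong refl) (rule bind_commute_pmf)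
  also have "\<dots> = bind_pmf S (\<lambda>s. bind_pmf U (\<lambda>m. bind_pmf (f m) (\<lambda>x. bind_pmf (NN s) (\<lambda>e. return_pmf (m, s, chan_out N B x e)))))"
    by (rule bind_commute_pmf)
  also have "\<dots> = bind_pmf S (\<lambda>s. bind_pmf U (\<lambda>m. bind_pmf (f m) (\<lambda>x. bind_pmf (NN s) (\<lambda>e. return_pmf (m, s, xorf (trunc (N*B) x) e)))))"
    by (intro bind_pmf_cong refl) (simp add: ch)
  also have "\<dots> = bind_pmf S (\<lambda>s. map_pmf (\<lambda>(m,c). (m,s,c)) (bind_pmf U (\<lambda>m. map_pmf (Pair m) (conv (map_pmf (trunc (N*B)) (f m)) (NN s)))))"
    by (simp add: conv_def map_pmf_def bind_assoc_pmf bind_return_pmf)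
  finally show ?thesis .
qed

lemma code_Y: "map_pmf (\<lambda>(m,s,y,z). (m,s,y)) (code_dist N B q1 p1 p2 ps1 ps2 K f)
  = bind_pmf (pmf_of_set {..<K}) (\<lambda>m. bind_pmf (f m) (\<lambda>x. bind_pmf (Pi_pmf {..<B} 1 (\<lambda>_. state_pmf q1))
     (\<lambda>s. bind_pmf (noise_pmf N B p1 p2 s) (\<lambda>e. return_pmf (m, s, chan_out N B x e)))))"
  by (simp add: code_dist_def map_pmf_def bind_assoc_pmf bind_return_pmf bind_pmf_const)

lemma code_Z: "map_pmf (\<lambda>(m,s,y,z). (m,s,z)) (code_dist N B q1 p1 p2 ps1 ps2 K f)
  = bind_pmf (pmf_of_set {..<K}) (\<lambda>m. bind_pmf (f m) (\<lambda>x. bind_pmf (Pi_pmf {..<B} 1 (\<lambda>_. state_pmf q1))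
     (\<lambda>s. bind_pmf (noise_pmf N B ps1 ps2 s) (\<lambda>e. return_pmf (m, s, chan_out N B x e)))))"
  by (simp add: code_dist_def map_pmf_def bind_assoc_pmf bind_return_pmf bind_pmf_const)

lemma prob_as_pmf: "measure_pmf.prob M E = pmf (map_pmf (\<lambda>x. x \<in> E) M) True"
proof -
  have "(\<lambda>x. x \<in> E) -` {True} = E" by auto
  thus ?thesis by (simp add: pmf_map)
qed

lemma prob_bind_sum:
  assumes "finite (set_pmf S)"
  shows "measure_pmf.prob (bind_pmf S F) E = (\<Sum>s\<in>set_pmf S. pmf S s * measure_pmf.prob (F s) E)"
  unfolding prob_as_pmf map_bind_pmf using assms by (intro pmf_bind_sum) auto

lemma finite_Pi_pmf_gen:
  assumes "finite A" "\<And>x. finite (set_pmf (p x))"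
  shows "finite (set_pmf (Pi_pmf A d p))"
proof (rule finite_subset[OF set_Pi_pmf_subset'[OF assms(1)]])
  show "finite (PiE_dflt A d (set_pmf \<circ> p))" using assms by (intro finite_PiE_dflt) auto
qed

lemma state_avg:
  fixes k B :: nat and \<phi> :: "nat \<Rightarrow> real"
  assumes "k < B" "0 \<le> q1" "q1 \<le> 1"
  shows "(\<Sum>s\<in>set_pmf (Pi_pmf {..<B} 1 (\<lambda>_. state_pmf q1)). pmf (Pi_pmf {..<B} 1 (\<lambda>_. state_pmf q1)) s * \<phi> (s k))
    = q1 * \<phi> 1 + (1 - q1) * \<phi> 2"
proof -
  let ?S = "Pi_pmf {..<B} 1 (\<lambda>_. state_pmf q1)"
  have fst: "finite (set_pmf (state_pmf q1))" by (simp add: state_pmf_def)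
  have fS: "finite (set_pmf ?S)" using fst by (intro finite_Pi_pmf_gen) auto
  have "(\<Sum>s\<in>set_pmf ?S. pmf ?S s * \<phi> (s k)) = measure_pmf.expectation ?S (\<lambda>s. \<phi> (s k))"
    using fS by (subst integral_measure_pmf[of "set_pmf ?S"]) auto
  also have "\<dots> = measure_pmf.expectation (map_pmf (\<lambda>s. s k) ?S) \<phi>" by simp
  also have "map_pmf (\<lambda>s. s k) ?S = state_pmf q1" using assms by (simp add: Pi_pmf_component)
  also have "measure_pmf.expectation (state_pmf q1) \<phi> = measure_pmf.expectation (bernoulli_pmf q1) (\<lambda>b. \<phi> (if b then 1 else 2))"
    by (simp add: state_pmf_def)
  also have "\<dots> = q1 * \<phi> 1 + (1 - q1) * \<phi> 2"
    using assms by (subst integral_measure_pmf[of UNIV]) (auto simp: UNIV_bool)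
  finally show ?thesis .
qed




definition Cap :: "real \<Rightarrow> real \<Rightarrow> real \<Rightarrow> real \<Rightarrow> real \<Rightarrow> real" where
  "Cap q1 p1 p2 ps1 ps2 = q1 * (bin_entropy ps1 - bin_entropy p1) + (1 - q1) * (bin_entropy ps2 - bin_entropy p2)"

lemma per_n:
  fixes N B K :: nat and q1 p1 p2 ps1 ps2 :: real
  assumes q: "0 \<le> q1" "q1 \<le> 1"
    and pp: "0 \<le> p1" "p1 \<le> ps1" "ps1 \<le> 1/2" "0 \<le> p2" "p2 \<le> ps2" "ps2 \<le> 1/2"
    and K: "K \<ge> 1"
  shows "(1 - err_prob N B q1 p1 p2 ps1 ps2 K f g) * log 2 K - 1
     \<le> leakage N B q1 p1 p2 ps1 ps2 K f + real (N*B) * Cap q1 p1 p2 ps1 ps2"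
proof -
  define S where "S = Pi_pmf {..<B} 1 (\<lambda>_. state_pmf q1)"
  define U where "U = pmf_of_set {..<K}"
  define P where "P = (\<lambda>m. map_pmf (trunc (N*B)) (f m))"
  define NY where "NY = (\<lambda>s. noise_pmf N B p1 p2 s)"
  define NZ where "NZ = (\<lambda>s. noise_pmf N B ps1 ps2 s)"
  define R where "R = (\<lambda>s. Pi_pmf {..<N*B} False (\<lambda>i. bernoulli_pmf (cf (xover p1 p2 (s (i div N))) (xover ps1 ps2 (s (i div N))))))"
  define DY where "DY = (\<lambda>s. bind_pmf U (\<lambda>m. map_pmf (Pair m) (conv (P m) (NY s))))"
  define DZ where "DZ = (\<lambda>s. bind_pmf U (\<lambda>m. map_pmf (Pair m) (conv (P m) (NZ s))))"
  define \<Delta> where "\<Delta> = (\<lambda>t. bin_entropy (xover ps1 ps2 t) - bin_entropy (xover p1 p2 t))"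
  have fS: "finite (set_pmf S)" unfolding S_def by (intro finite_Pi_pmf_gen) (auto simp: state_pmf_def)
  have "0 \<in> {..<K}" using K by simp
  hence Kne: "{..<K} \<noteq> {}" by blast
  have fU: "finite (set_pmf U)" unfolding U_def set_pmf_of_set[OF Kne finite_lessThan[of K]] by simp
  have fP: "finite (set_pmf (P m))" for m
  proof -
    have "set_pmf (P m) \<subseteq> {x. \<forall>i. i \<notin> {..<N*B} \<longrightarrow> x i = False}" by (auto simp: P_def trunc_def)
    thus ?thesis using finite_funs[of "{..<N*B}"] by (auto intro: finite_subset)
  qed
  have fNY: "finite (set_pmf (NY s))" for s by (simp add: NY_def noise_pmf_def finite_Pi_pmf)
  have fNZ: "finite (set_pmf (NZ s))" for s by (simp add: NZ_def noise_pmf_def finite_Pi_pmf)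
  have fR: "finite (set_pmf (R s))" for s by (simp add: R_def finite_Pi_pmf)
  have fDY: "finite (set_pmf (DY s))" for s using fU fP fNY by (simp add: DY_def set_bind_pmf finite_conv)
  have fDZ: "finite (set_pmf (DZ s))" for s using fU fP fNZ by (simp add: DZ_def set_bind_pmf finite_conv)
  have JY: "map_pmf (\<lambda>(m,s,y,z). (m,s,y)) (code_dist N B q1 p1 p2 ps1 ps2 K f) = bind_pmf S (\<lambda>s. map_pmf (\<lambda>(m,c). (m,s,c)) (DY s))"
    unfolding code_Y DY_def P_def NY_def S_def U_def by (rule proj_gen) (rule noise_supp)
  have JZ: "map_pmf (\<lambda>(m,s,y,z). (m,s,z)) (code_dist N B q1 p1 p2 ps1 ps2 K f) = bind_pmf S (\<lambda>s. map_pmf (\<lambda>(m,c). (m,s,c)) (DZ s))"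
    unfolding code_Z DZ_def P_def NZ_def S_def U_def by (rule proj_gen) (rule noise_supp)
  have leak: "leakage N B q1 p1 p2 ps1 ps2 K f = (\<Sum>s\<in>set_pmf S. pmf S s * mi (DZ s))"
    unfolding leakage_def JZ using fS fDZ by (rule cmi_decomp)
  define e where "e = (\<lambda>s. measure_pmf.prob (DY s) {(m,c). g c s \<noteq> m})"
  have err: "err_prob N B q1 p1 p2 ps1 ps2 K f g = (\<Sum>s\<in>set_pmf S. pmf S s * e s)"
  proof -
    have "err_prob N B q1 p1 p2 ps1 ps2 K f g = measure_pmf.prob (map_pmf (\<lambda>(m,s,y,z). (m,s,y)) (code_dist N B q1 p1 p2 ps1 ps2 K f)) {(m,s,y). g y s \<noteq> m}"
      unfolding err_prob_def measure_map_pmf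
      by (intro arg_cong[where f="measure_pmf.prob (code_dist N B q1 p1 p2 ps1 ps2 K f)"]) auto
    also have "\<dots> = (\<Sum>s\<in>set_pmf S. pmf S s * measure_pmf.prob (map_pmf (\<lambda>(m,c). (m,s,c)) (DY s)) {(m,s,y). g y s \<noteq> m})"
      unfolding JY using fS by (rule prob_bind_sum)
    also have "\<dots> = (\<Sum>s\<in>set_pmf S. pmf S s * e s)"
    proof (intro sum.cong refl)
      fix s
      have "(\<lambda>(m,c). (m,s,c)) -` {(m,s,y). g y s \<noteq> m} = {(m,c). g c s \<noteq> m}" by auto
      thus "pmf S s * measure_pmf.prob (map_pmf (\<lambda>(m,c). (m,s,c)) (DY s)) {(m,s,y). g y s \<noteq> m} = pmf S s * e s"
        by (simp only: e_def measure_map_pmf)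
    qed
    finally show ?thesis .
  qed
  have fano_s: "(1 - e s) * log 2 K - 1 \<le> mi (DY s)" for s
    unfolding DY_def U_def e_def using K fP fNY by (intro fano) (auto simp: finite_conv)
  have sum1: "(\<Sum>s\<in>set_pmf S. pmf S s) = 1" using fS by (simp add: sum_pmf_eq_1)
  have IY: "(1 - err_prob N B q1 p1 p2 ps1 ps2 K f g) * log 2 K - 1 \<le> (\<Sum>s\<in>set_pmf S. pmf S s * mi (DY s))"
  proof -
    have "(\<Sum>s\<in>set_pmf S. pmf S s * ((1 - e s) * log 2 K - 1))
        = (\<Sum>s\<in>set_pmf S. pmf S s) * log 2 K - (\<Sum>s\<in>set_pmf S. pmf S s * e s) * log 2 K - (\<Sum>s\<in>set_pmf S. pmf S s)"
    proof -
      have "(\<Sum>s\<in>set_pmf S. pmf S s * ((1 - e s) * log 2 K - 1))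
          = (\<Sum>s\<in>set_pmf S. pmf S s * log 2 K - pmf S s * e s * log 2 K - pmf S s)"
        by (intro sum.cong refl) (simp add: algebra_simps)
      also have "\<dots> = (\<Sum>s\<in>set_pmf S. pmf S s * log 2 K) - (\<Sum>s\<in>set_pmf S. pmf S s * e s * log 2 K) - (\<Sum>s\<in>set_pmf S. pmf S s)"
        by (simp only: sum_subtractf)
      also have "\<dots> = (\<Sum>s\<in>set_pmf S. pmf S s) * log 2 K - (\<Sum>s\<in>set_pmf S. pmf S s * e s) * log 2 K - (\<Sum>s\<in>set_pmf S. pmf S s)"
        by (simp only: sum_distrib_right)
      finally show ?thesis .
    qed
    also have "\<dots> = (1 - err_prob N B q1 p1 p2 ps1 ps2 K f g) * log 2 K - 1"
      by (simp add: sum1 err algebra_simps)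
    finally have eq: "(\<Sum>s\<in>set_pmf S. pmf S s * ((1 - e s) * log 2 K - 1)) = (1 - err_prob N B q1 p1 p2 ps1 ps2 K f g) * log 2 K - 1" .
    have "(\<Sum>s\<in>set_pmf S. pmf S s * ((1 - e s) * log 2 K - 1)) \<le> (\<Sum>s\<in>set_pmf S. pmf S s * mi (DY s))"
      using fano_s by (intro sum_mono mult_left_mono) auto
    thus ?thesis using eq by simp
  qed
  have ps: "mi (DY s) - mi (DZ s) \<le> (\<Sum>i<N*B. \<Delta> (s (i div N)))" for s
  proof -
    have "NZ s = conv (NY s) (R s)" unfolding NZ_def NY_def R_def using pp by (rule noise_split)
    hence "mi (DY s) - mi (DZ s) \<le> ent (NZ s) - ent (NY s)"
      unfolding DY_def DZ_def using per_s[OF fU fP fNY fR] by simp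
    also have "ent (NZ s) = (\<Sum>i<N*B. bin_entropy (xover ps1 ps2 (s (i div N))))"
      unfolding NZ_def using pp by (intro ent_noise) auto
    also have "ent (NY s) = (\<Sum>i<N*B. bin_entropy (xover p1 p2 (s (i div N))))"
      unfolding NY_def using pp by (intro ent_noise) auto
    finally show ?thesis by (simp add: \<Delta>_def sum_subtractf)
  qed
  have "(\<Sum>s\<in>set_pmf S. pmf S s * mi (DY s)) - (\<Sum>s\<in>set_pmf S. pmf S s * mi (DZ s))
      \<le> (\<Sum>s\<in>set_pmf S. pmf S s * (\<Sum>i<N*B. \<Delta> (s (i div N))))"
    unfolding sum_subtractf[symmetric] right_diff_distrib[symmetric]
    using ps by (intro sum_mono mult_left_mono) auto
  also have "\<dots> = (\<Sum>i<N*B. \<Sum>s\<in>set_pmf S. pmf S s * \<Delta> (s (i div N)))"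
    by (simp add: sum_distrib_left sum.swap[of _ "set_pmf S"])
  also have "\<dots> = (\<Sum>i<N*B. Cap q1 p1 p2 ps1 ps2)"
  proof (intro sum.cong refl)
    fix i assume "i \<in> {..<N*B}"
    hence "i div N < B" by (simp add: less_mult_imp_div_less mult.commute)
    thus "(\<Sum>s\<in>set_pmf S. pmf S s * \<Delta> (s (i div N))) = Cap q1 p1 p2 ps1 ps2"
      unfolding S_def using q by (subst state_avg) (auto simp: Cap_def \<Delta>_def xover_def)
  qed
  also have "\<dots> = real (N*B) * Cap q1 p1 p2 ps1 ps2" by simp
  finally show ?thesis using IY leak by linarith
qed




lemma ach_le:
  fixes q1 p1 p2 ps1 ps2 R :: real
  assumes q: "0 \<le> q1" "q1 \<le> 1"
    and pp: "0 \<le> p1" "p1 \<le> ps1" "ps1 \<le> 1/2" "0 \<le> p2" "p2 \<le> ps2" "ps2 \<le> 1/2"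
    and ach: "achievable_rate q1 p1 p2 ps1 ps2 R"
  shows "R \<le> Cap q1 p1 p2 ps1 ps2"
proof -
  obtain N B K :: "nat \<Rightarrow> nat" and f :: "nat \<Rightarrow> nat \<Rightarrow> (nat \<Rightarrow> bool) pmf"
    and g :: "nat \<Rightarrow> (nat \<Rightarrow> bool) \<Rightarrow> (nat \<Rightarrow> nat) \<Rightarrow> nat" where
    N: "filterlim N at_top sequentially" and B: "filterlim B at_top sequentially"
    and K: "\<forall>n. K n \<ge> 1"
    and rate: "\<forall>\<epsilon>>0. eventually (\<lambda>n. log 2 (real (K n)) / real (N n * B n) \<ge> R - \<epsilon>) sequentially"
    and err: "(\<lambda>n. err_prob (N n) (B n) q1 p1 p2 ps1 ps2 (K n) (f n) (g n)) \<longlonglongrightarrow> 0"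
    and leak: "(\<lambda>n. leakage (N n) (B n) q1 p1 p2 ps1 ps2 (K n) (f n) / real (N n * B n)) \<longlonglongrightarrow> 0"
    using ach unfolding achievable_rate_def by blast
  define C where "C = Cap q1 p1 p2 ps1 ps2"
  define L where "L = (\<lambda>n. real (N n * B n))"
  define E where "E = (\<lambda>n. err_prob (N n) (B n) q1 p1 p2 ps1 ps2 (K n) (f n) (g n))"
  define Lk where "Lk = (\<lambda>n. leakage (N n) (B n) q1 p1 p2 ps1 ps2 (K n) (f n))"
  have evN: "eventually (\<lambda>n. 1 \<le> N n) sequentially" using N by (simp add: filterlim_at_top)
  have evB: "eventually (\<lambda>n. 1 \<le> B n) sequentially" using B by (simp add: filterlim_at_top)
  have NL: "filterlim (\<lambda>n. real (N n)) at_top sequentially"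
    by (rule filterlim_compose[OF filterlim_real_sequentially N])
  have invN: "(\<lambda>n. inverse (real (N n))) \<longlonglongrightarrow> 0" by (rule tendsto_inverse_0_at_top[OF NL])
  have invL: "(\<lambda>n. 1 / L n) \<longlonglongrightarrow> 0"
  proof (rule tendsto_sandwich[OF _ _ tendsto_const invN])
    show "eventually (\<lambda>n. 0 \<le> 1 / L n) sequentially" by (simp add: L_def)
    show "eventually (\<lambda>n. 1 / L n \<le> inverse (real (N n))) sequentially"
      using evN evB
    proof eventually_elim
      case (elim n)
      have "real (N n) \<le> real (N n) * real (B n)" using elim by simp
      thus ?case using elim by (simp add: L_def field_simps frac_le)
    qed
  qed
  show ?thesis
  proof (rule field_le_epsilon)
    fix \<epsilon> :: real assume \<epsilon>: "0 < \<epsilon>"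
    have ev: "eventually (\<lambda>n. (1 - E n) * (R - \<epsilon>) \<le> Lk n / L n + C + 1 / L n) sequentially"
      using rate[rule_format, OF \<epsilon>] evN evB
    proof eventually_elim
      case (elim n)
      have Lp: "0 < L n" using elim by (simp add: L_def)
      have E1: "0 \<le> 1 - E n" by (simp add: E_def err_prob_def measure_pmf.prob_le_1)
      have pn: "(1 - E n) * log 2 (K n) - 1 \<le> Lk n + L n * C"
        unfolding E_def Lk_def L_def C_def using q pp K by (intro per_n) auto
      have "(1 - E n) * (R - \<epsilon>) \<le> (1 - E n) * (log 2 (real (K n)) / L n)"
        using elim E1 by (intro mult_left_mono) (auto simp: L_def)
      also have "\<dots> = ((1 - E n) * log 2 (K n) - 1) / L n + 1 / L n"
        using Lp by (simp add: field_simps)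
      also have "\<dots> \<le> (Lk n + L n * C) / L n + 1 / L n"
        using pn Lp by (simp add: divide_right_mono)
      also have "\<dots> = Lk n / L n + C + 1 / L n" using Lp by (simp add: field_simps)
      finally show ?case .
    qed
    have t1: "(\<lambda>n. (1 - E n) * (R - \<epsilon>)) \<longlonglongrightarrow> (1 - 0) * (R - \<epsilon>)"
      using err unfolding E_def by (intro tendsto_intros)
    have t2: "(\<lambda>n. Lk n / L n + C + 1 / L n) \<longlonglongrightarrow> 0 + C + 0"
      using leak invL unfolding Lk_def L_def by (intro tendsto_intros) auto
    have "(1 - 0) * (R - \<epsilon>) \<le> 0 + C + 0"
      by (rule tendsto_le[OF trivial_limit_sequentially t2 t1 ev])
    thus "R \<le> Cap q1 p1 p2 ps1 ps2 + \<epsilon>" by (simp add: C_def)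
  qed
qed

theorem lemma1:
  fixes q1 q2 p1 p2 ps1 ps2 :: real
  assumes "0 \<le> q1" "q1 \<le> 1" "q2 = 1 - q1"
    and "0 \<le> p1" "p1 \<le> p2" "p2 \<le> 1/2"
    and "0 \<le> ps1" "ps1 \<le> ps2" "ps2 \<le> 1/2"
    and "p1 \<le> ps1" "p2 \<le> ps2"
  shows "secrecy_capacity_CSI_D q1 p1 p2 ps1 ps2
           \<le> ereal (q1 * (bin_entropy ps1 - bin_entropy p1) + q2 * (bin_entropy ps2 - bin_entropy p2))"
  unfolding secrecy_capacity_CSI_D_def
proof (rule Sup_least, clarify)
  fix R assume "achievable_rate q1 p1 p2 ps1 ps2 R"
  hence "R \<le> Cap q1 p1 p2 ps1 ps2" using assms by (intro ach_le) auto
  thus "ereal R \<le> ereal (q1 * (bin_entropy ps1 - bin_entropy p1) + q2 * (bin_entropy ps2 - bin_entropy p2))"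
    using assms by (simp add: Cap_def)
qed


end
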